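(* Let $K_1,K_2\subset\mathbb{C}$ be compacta such that $K_1\cap K_2$ is a finite set, and let $K=K_1\cup K_2$. Suppose that for every $x\in K_1\cap K_2$ and for $i=1,2$, the element of $\mathcal{D}_{K_i}^{PS}$ containing $x$ equals $\{x\}$. Then $\mathcal{D}_K^{PS}=\mathcal{D}_{K_1}^{PS}\cup\mathcal{D}_{K_2}^{PS}$. In particular, $\{x\}\in\mathcal{D}_K^{PS}$ for all $x\in K_1\cap K_2$.
   Context: A Peano space is a compactum with at most countably many non-degenerate components, each locally connected, and for each $C>0$ only finitely many of diameter $>C$. For a compactum $X\subset\hat{\mathbb{C}}$, $\mathcal{D}_X^{PS}$ is the finest monotone (upper semicontinuous, into subcontinua) decomposition of $X$ whose quotient hyperspace is a Peano space (its existence is known). *)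

theory Defs
  imports "HOL-Analysis.Analysis"
begin

definition set_diam :: "('a \<Rightarrow> 'a \<Rightarrow> real) \<Rightarrow> 'a set \<Rightarrow> real" where
  "set_diam d C = Sup {d x y | x y. x \<in> C \<and> y \<in> C}"

definition peano_space :: "'a topology \<Rightarrow> bool" where
  "peano_space T \<longleftrightarrow> compact_space T \<and>
     (\<exists>M d. Metric_space M d \<and> T = Metric_space.mtopology M d \<and>
        (\<forall>c>0. finite {C \<in> connected_components_of T. set_diam d C > c})) \<and>
     countable {C \<in> connected_components_of T. \<not> (\<exists>a. C = {a})} \<and>
     (\<forall>C \<in> connected_components_of T. \<not> (\<exists>a. C = {a}) \<longrightarrow>
        locally_connected_space (subtopology T C))"

definition monotone_decomp :: "'a::topological_space set \<Rightarrow> 'a set set \<Rightarrow> bool" where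
  "monotone_decomp K D \<longleftrightarrow>
     \<Union>D = K \<and>
     (\<forall>d\<in>D. d \<noteq> {} \<and> compact d \<and> connected d) \<and>
     (\<forall>d\<in>D. \<forall>e\<in>D. d \<noteq> e \<longrightarrow> d \<inter> e = {}) \<and>
     (\<forall>d\<in>D. \<forall>U. open U \<and> d \<subseteq> U \<longrightarrow>
        (\<exists>V. open V \<and> d \<subseteq> V \<and> (\<forall>e\<in>D. e \<inter> V \<noteq> {} \<longrightarrow> e \<subseteq> U)))"

definition decomp_proj :: "'a set set \<Rightarrow> 'a \<Rightarrow> 'a set" where
  "decomp_proj D x = (THE d. d \<in> D \<and> x \<in> d)"

definition decomp_topology :: "'a::topological_space set \<Rightarrow> 'a set set \<Rightarrow> 'a set topology" where
  "decomp_topology K D = topology (\<lambda>W. W \<subseteq> D \<and>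
      openin (top_of_set K) {x \<in> K. decomp_proj D x \<in> W})"

lemma istopology_decomp: "istopology (\<lambda>W. W \<subseteq> D \<and>
      openin (top_of_set K) {x \<in> K. decomp_proj D x \<in> W})"
proof -
  have i: "{x \<in> K. decomp_proj D x \<in> S \<inter> T} =
        {x \<in> K. decomp_proj D x \<in> S} \<inter> {x \<in> K. decomp_proj D x \<in> T}" for S T by auto
  have u: "{x \<in> K. decomp_proj D x \<in> \<Union>F} =
        \<Union> ((\<lambda>W. {x \<in> K. decomp_proj D x \<in> W}) ` F)" for F by auto
  show ?thesis unfolding istopology_def
    by (intro conjI allI impI; (simp only: i u)?; blast intro: openin_Int openin_Union)
qed

definition is_DPS :: "'a::topological_space set \<Rightarrow> 'a set set \<Rightarrow> bool" where
  "is_DPS K D \<longleftrightarrow> monotone_decomp K D \<and> peano_space (decomp_topology K D) \<and>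
     (\<forall>D'. monotone_decomp K D' \<and> peano_space (decomp_topology K D') \<longrightarrow>
        (\<forall>d\<in>D. \<exists>d'\<in>D'. d \<subseteq> d'))"

end

theory Submission
  imports Defs
begin


lemma metric_topology_eqI:
  assumes cT: "compact_space T" and M: "Metric_space (topspace T) \<rho>"
   and H: "\<And>q e. q \<in> topspace T \<Longrightarrow> e > 0 \<Longrightarrow> \<exists>U. openin T U \<and> q \<in> U \<and> (\<forall>z\<in>U. \<rho> q z < e)"
  shows "T = Metric_space.mtopology (topspace T) \<rho>"
proof -
  interpret m: Metric_space "topspace T" \<rho> by (rule M)
  have "openin T S \<longleftrightarrow> openin m.mtopology S" for S
  proof
    assume S: "openin T S"
    have "\<exists>r>0. m.mball x r \<subseteq> S" if x: "x \<in> S" for x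
    proof -
      have xT: "x \<in> topspace T" using S x openin_subset by blast
      have "\<forall>z\<in>topspace T - S. \<exists>U. openin T U \<and> z \<in> U \<and> (\<forall>w\<in>U. \<rho> z w < \<rho> x z / 2)"
      proof
        fix z assume z: "z \<in> topspace T - S"
        then have "z \<noteq> x" using x by blast
        then have "\<rho> x z > 0" using xT z m.mdist_pos_eq by auto
        then show "\<exists>U. openin T U \<and> z \<in> U \<and> (\<forall>w\<in>U. \<rho> z w < \<rho> x z / 2)"
          using H[of z "\<rho> x z / 2"] z by auto
      qed
      then obtain Uf where Uf: "\<And>z. z \<in> topspace T - S \<Longrightarrow> openin T (Uf z) \<and> z \<in> Uf z \<and> (\<forall>w\<in>Uf z. \<rho> z w < \<rho> x z / 2)"
        by metis
      have "compactin T (topspace T - S)"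
        using S cT by (simp add: closedin_compact_space closedin_diff)
      then obtain \<F> where F: "finite \<F>" "\<F> \<subseteq> Uf ` (topspace T - S)" "topspace T - S \<subseteq> \<Union>\<F>"
        unfolding compactin_def
        apply (elim conjE)
        apply (drule spec[of _ "Uf ` (topspace T - S)"])
        using Uf by (auto)
      then obtain Z where Z: "Z \<subseteq> topspace T - S" "finite Z" "\<F> = Uf ` Z"
        by (meson finite_subset_image)
      define r where "r = Min (insert 1 ((\<lambda>z. \<rho> x z / 2) ` Z))"
      have rpos: "r > 0"
        unfolding r_def
      proof (subst Min_gr_iff)
        show "\<forall>a\<in>insert 1 ((\<lambda>z. \<rho> x z / 2) ` Z). 0 < a"
        proof
          fix a assume "a \<in> insert 1 ((\<lambda>z. \<rho> x z / 2) ` Z)"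
          then consider "a = 1" | z where "z \<in> Z" "a = \<rho> x z / 2" by auto
          then show "0 < a"
          proof cases
            case 2
            then have "z \<noteq> x" "z \<in> topspace T" using Z x by auto
            then have "\<rho> x z > 0" using xT m.mdist_pos_eq by auto
            then show ?thesis using 2 by simp
          qed simp
        qed
      qed (use Z in auto)
      have "m.mball x r \<subseteq> S"
      proof
        fix w assume w: "w \<in> m.mball x r"
        show "w \<in> S"
        proof (rule ccontr)
          assume "w \<notin> S"
          then have "w \<in> topspace T - S" using w by auto
          then obtain z where z: "z \<in> Z" "w \<in> Uf z" using F Z by auto
          then have "\<rho> z w < \<rho> x z / 2" using Uf Z by blast
          moreover have "r \<le> \<rho> x z / 2" unfolding r_def using z Z by (intro Min_le) auto
          moreover have "\<rho> x z \<le> \<rho> x w + \<rho> w z" using m.triangle w z Z xT by auto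
          moreover have "\<rho> w z = \<rho> z w" using m.commute by auto
          moreover have "\<rho> x w < r" using w by auto
          ultimately show False by linarith
        qed
      qed
      then show ?thesis using rpos by blast
    qed
    then show "openin m.mtopology S"
      using openin_subset[OF S] m.openin_mtopology by auto
  next
    assume S: "openin m.mtopology S"
    show "openin T S"
    proof (subst openin_subopen, intro ballI)
      fix x assume x: "x \<in> S"
      obtain r where r: "r > 0" "m.mball x r \<subseteq> S" using S x m.openin_mtopology by blast
      have xT: "x \<in> topspace T" using S x m.openin_mtopology by blast
      obtain U where U: "openin T U" "x \<in> U" "\<forall>z\<in>U. \<rho> x z < r" using H[OF xT r(1)] by blast
      have "U \<subseteq> S"
      proof
        fix z assume "z \<in> U"
        then have "z \<in> m.mball x r" using U xT openin_subset by fastforce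
        then show "z \<in> S" using r by blast
      qed
      then show "\<exists>T'. openin T T' \<and> x \<in> T' \<and> T' \<subseteq> S" using U by blast
    qed
  qed
  then show ?thesis by (simp add: topology_eq)
qed

lemma comp_boundary:
  assumes cT: "compact_space T" and hT: "Hausdorff_space T" and S: "closedin T S"
   and Fin: "finite (S \<inter> (T closure_of (topspace T - S)))"
   and C: "C \<in> connected_components_of (subtopology T S)"
   and dis: "C \<inter> (S \<inter> (T closure_of (topspace T - S))) = {}"
  shows "C \<in> connected_components_of T"
proof -
  define Bd where "Bd = S \<inter> (T closure_of (topspace T - S))"
  have SX: "S \<subseteq> topspace T" using S closedin_subset by blast
  let ?X = "subtopology T S"
  have cX: "compact_space ?X"
    by (simp add: S cT closedin_compact_space compact_space_subtopology)
  have hX: "Hausdorff_space ?X" by (simp add: Hausdorff_space_subtopology hT)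
  have CX: "compactin ?X C"
    by (simp add: C cX closedin_compact_space closedin_connected_components_of)
  have t1: "t1_space ?X" using hX Hausdorff_imp_t1_space by blast
  have "closedin ?X Bd"
  proof -
    have "Bd \<subseteq> topspace ?X" unfolding Bd_def using SX by auto
    then show ?thesis using t1 Fin unfolding t1_space_closedin_finite Bd_def by blast
  qed
  then have W: "openin ?X (S - Bd)"
    by (metis SX closedin_def topspace_subtopology_subset)
  have CW: "C \<subseteq> S - Bd"
  proof -
    have "C \<subseteq> topspace ?X" using C by (rule connected_components_of_subset)
    then show ?thesis using dis unfolding Bd_def by auto
  qed
  obtain U V where UV: "openin ?X U" "openin ?X V" "disjnt U V" "U \<union> V = topspace ?X" "C \<subseteq> U" "U \<subseteq> S - Bd"
    by (rule wilder_locally_compact_component_thm[OF compact_imp_locally_compact_space[OF cX] hX C CX W CW])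
  have "closedin ?X U"
  proof -
    have "U = topspace ?X - V" using UV(3,4) by (auto simp: disjnt_def)
    then show ?thesis using UV(2) by (metis closedin_diff closedin_topspace)
  qed
  then have Ucl: "closedin T U" using S by (rule closedin_trans_full)
  obtain Ob where Ob: "openin T Ob" "U = Ob \<inter> S" using UV(1) unfolding openin_subtopology by blast
  have Uint: "U \<subseteq> T interior_of S"
  proof
    fix x assume x: "x \<in> U"
    then have "x \<in> S" "x \<notin> Bd" using UV(6) by auto
    then have "x \<notin> T closure_of (topspace T - S)" unfolding Bd_def by auto
    then show "x \<in> T interior_of S" using SX \<open>x \<in> S\<close> by (simp add: interior_of_closure_of subsetD)
  qed
  have "U = Ob \<inter> T interior_of S"
    using Ob(2) Uint interior_of_subset[of T S] by blast
  then have Uop: "openin T U" using openin_Int[OF Ob(1) openin_interior_of] by simp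
  obtain x where x: "x \<in> C" using nonempty_connected_components_of[OF C] by blast
  have "C \<subseteq> topspace ?X" using C by (rule connected_components_of_subset)
  then have xT: "x \<in> topspace T" using x SX by auto
  define P where "P = connected_component_of_set T x"
  have Pc: "connectedin T P" unfolding P_def by (rule connectedin_connected_component_of)
  have xP: "x \<in> P" unfolding P_def mem_Collect_eq using xT by (rule connected_component_of_refl[THEN iffD2])
  have "P \<subseteq> U \<or> disjnt P U" using connectedin_clopen_cases[OF Pc Ucl Uop] .
  moreover have "\<not> disjnt P U" using xP x UV(5) unfolding disjnt_def by blast
  ultimately have PU: "P \<subseteq> U" by blast
  have "connectedin ?X P" unfolding connectedin_subtopology using Pc PU UV(6) by blast
  moreover have "\<not> disjnt C P" using xP x unfolding disjnt_def by blast
  ultimately have "P \<subseteq> C" using connected_components_of_maximal[OF C] by blast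
  moreover have "C \<subseteq> P"
  proof -
    have "connectedin ?X C" using C by (rule connectedin_connected_components_of)
    then have "connectedin T C" unfolding connectedin_subtopology by blast
    then show ?thesis unfolding P_def using x by (rule connected_component_of_maximal)
  qed
  ultimately have "C = P" by blast
  then show ?thesis unfolding P_def using connected_component_in_connected_components_of[of T x] xT by simp
qed

lemma connectedin_Int_closed_pinch_aux:
  assumes U: "connectedin T U" and S: "closedin T S" and x: "x \<in> U" "x \<in> S"
    and int: "\<And>z. z \<in> U \<Longrightarrow> z \<in> S \<Longrightarrow> z \<noteq> x \<Longrightarrow> z \<in> T interior_of S"
    and E: "openin T E1" "openin T E2" "U \<inter> S \<subseteq> E1 \<union> E2" "E1 \<inter> E2 \<inter> (U \<inter> S) = {}"
           "E2 \<inter> (U \<inter> S) \<noteq> {}" "x \<in> E1"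
  shows False
proof -
  define G1 where "G1 = E1 \<union> (topspace T - S)"
  define G2 where "G2 = E2 \<inter> T interior_of S"
  have o1: "openin T G1" unfolding G1_def using E(1) S by (simp add: openin_Un openin_diff)
  have o2: "openin T G2" unfolding G2_def using E(2) by (simp add: openin_Int)
  have IS: "T interior_of S \<subseteq> S" by (rule interior_of_subset)
  have UT: "U \<subseteq> topspace T" using U connectedin_subset_topspace by blast
  have c1: "U \<subseteq> G1 \<union> G2"
  proof
    fix z assume z: "z \<in> U"
    show "z \<in> G1 \<union> G2"
    proof (cases "z \<in> S")
      case False then show ?thesis using z UT unfolding G1_def by blast
    next
      case True
      then have "z \<in> E1 \<or> z \<in> E2" using E(3) z by blast
      moreover have "z \<in> E2 \<Longrightarrow> z \<noteq> x \<Longrightarrow> z \<in> T interior_of S" using int z True by blast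
      ultimately show ?thesis unfolding G1_def G2_def using E(6) by blast
    qed
  qed
  have c2: "G1 \<inter> G2 \<inter> U = {}"
    unfolding G1_def G2_def using E(4) IS by blast
  have c3: "G1 \<inter> U \<noteq> {}" unfolding G1_def using x E(6) by blast
  obtain z where z: "z \<in> E2" "z \<in> U" "z \<in> S" using E(5) by blast
  have "z \<noteq> x" using z E(4,6) x by blast
  then have "z \<in> T interior_of S" using int z by blast
  then have c4: "G2 \<inter> U \<noteq> {}" unfolding G2_def using z by blast
  show False using U o1 o2 c1 c2 c3 c4 unfolding connectedin by blast
qed

lemma connectedin_Int_closed_pinch:
  assumes U: "connectedin T U" and S: "closedin T S" and x: "x \<in> U" "x \<in> S"
    and int: "\<And>z. z \<in> U \<Longrightarrow> z \<in> S \<Longrightarrow> z \<noteq> x \<Longrightarrow> z \<in> T interior_of S"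
  shows "connectedin T (U \<inter> S)"
proof -
  have UT: "U \<subseteq> topspace T" using U connectedin_subset_topspace by blast
  have "\<not> (openin T E1 \<and> openin T E2 \<and> U \<inter> S \<subseteq> E1 \<union> E2 \<and> E1 \<inter> E2 \<inter> (U \<inter> S) = {} \<and>
           E1 \<inter> (U \<inter> S) \<noteq> {} \<and> E2 \<inter> (U \<inter> S) \<noteq> {})" for E1 E2
  proof
    assume H: "openin T E1 \<and> openin T E2 \<and> U \<inter> S \<subseteq> E1 \<union> E2 \<and> E1 \<inter> E2 \<inter> (U \<inter> S) = {} \<and>
           E1 \<inter> (U \<inter> S) \<noteq> {} \<and> E2 \<inter> (U \<inter> S) \<noteq> {}"
    then have "x \<in> E1 \<or> x \<in> E2" using x by blast
    then show False
    proof
      assume "x \<in> E1"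
      then show False using connectedin_Int_closed_pinch_aux[OF U S x int, of E1 E2] H by blast
    next
      assume "x \<in> E2"
      moreover have "E2 \<inter> E1 \<inter> (U \<inter> S) = {}" using H by blast
      ultimately show False using connectedin_Int_closed_pinch_aux[OF U S x int, of E2 E1] H by blast
    qed
  qed
  then show ?thesis unfolding connectedin using UT by blast
qed

lemma lc_component_closed:
  assumes hT: "Hausdorff_space T" and S: "closedin T S"
   and Fin: "finite (S \<inter> (T closure_of (topspace T - S)))"
   and C: "C \<in> connected_components_of (subtopology T S)"
   and Plc: "\<And>P. P \<in> connected_components_of T \<Longrightarrow> locally_connected_space (subtopology T P)"
  shows "locally_connected_space (subtopology T C)"
  unfolding locally_connected_space_im_kleinen
proof (intro allI impI, elim conjE)
  fix V x assume V: "openin (subtopology T C) V" and xV: "x \<in> V"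
  define Bd where "Bd = S \<inter> (T closure_of (topspace T - S))"
  have SX: "S \<subseteq> topspace T" using S closedin_subset by blast
  have CS: "C \<subseteq> S" using connected_components_of_subset[OF C] SX by auto
  obtain W0 where W0: "openin T W0" "V = W0 \<inter> C" using V unfolding openin_subtopology by blast
  have xC: "x \<in> C" using xV W0 by blast
  have xT: "x \<in> topspace T" using xC CS SX by blast
  define P where "P = connected_component_of_set T x"
  have PC: "P \<in> connected_components_of T" unfolding P_def
    using connected_component_in_connected_components_of[of T x] xT by simp
  have xP: "x \<in> P" unfolding P_def mem_Collect_eq using xT by (rule connected_component_of_refl[THEN iffD2])
  have Cconn: "connectedin T C"
  proof -
    have "connectedin (subtopology T S) C" using C by (rule connectedin_connected_components_of)
    then show ?thesis unfolding connectedin_subtopology by blast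
  qed
  have CP: "C \<subseteq> P" unfolding P_def using Cconn xC by (rule connected_component_of_maximal)
  have t1: "t1_space T" using hT Hausdorff_imp_t1_space by blast
  have "closedin T (Bd - {x})"
  proof -
    have "Bd - {x} \<subseteq> topspace T" unfolding Bd_def using SX by auto
    moreover have "finite (Bd - {x})" using Fin unfolding Bd_def by simp
    ultimately show ?thesis using t1 unfolding t1_space_closedin_finite by blast
  qed
  then have W1: "openin T (W0 - (Bd - {x}))" using W0(1) by (simp add: openin_diff)
  have "openin (subtopology T P) ((W0 - (Bd - {x})) \<inter> P)"
    unfolding openin_subtopology using W1 by blast
  moreover have "x \<in> (W0 - (Bd - {x})) \<inter> P" using xV W0 xP by blast
  ultimately obtain U1 where U1: "openin (subtopology T P) U1" "connectedin (subtopology T P) U1"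
     "x \<in> U1" "U1 \<subseteq> (W0 - (Bd - {x})) \<inter> P"
    using Plc[OF PC] unfolding locally_connected_space by blast
  obtain O1 where O1: "openin T O1" "U1 = O1 \<inter> P" using U1(1) unfolding openin_subtopology by blast
  have U1c: "connectedin T U1" using U1(2) unfolding connectedin_subtopology by blast
  have int: "z \<in> T interior_of S" if "z \<in> U1" "z \<in> S" "z \<noteq> x" for z
  proof -
    have "z \<notin> Bd" using that U1(4) by blast
    then have "z \<notin> T closure_of (topspace T - S)" using that(2) unfolding Bd_def by blast
    then show ?thesis using SX that(2) by (simp add: interior_of_closure_of subsetD)
  qed
  have Kc: "connectedin T (U1 \<inter> S)"
    using connectedin_Int_closed_pinch[OF U1c S U1(3) _ int] xC CS by blast
  have "connectedin (subtopology T S) (U1 \<inter> S)" unfolding connectedin_subtopology using Kc by blast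
  moreover have "\<not> disjnt C (U1 \<inter> S)" using xC CS U1(3) unfolding disjnt_def by blast
  ultimately have KC: "U1 \<inter> S \<subseteq> C" using connected_components_of_maximal[OF C] by blast
  show "\<exists>U. openin (subtopology T C) U \<and> x \<in> U \<and> U \<subseteq> V \<and>
             (\<forall>y\<in>U. \<exists>C'. connectedin (subtopology T C) C' \<and> C' \<subseteq> V \<and> x \<in> C' \<and> y \<in> C')"
  proof (intro exI conjI ballI)
    show "openin (subtopology T C) (O1 \<inter> C)" unfolding openin_subtopology using O1(1) by blast
    show "x \<in> O1 \<inter> C" using U1(3) O1(2) xC by blast
    show "O1 \<inter> C \<subseteq> V" using O1(2) CP U1(4) W0(2) by blast
    fix y assume y: "y \<in> O1 \<inter> C"
    show "connectedin (subtopology T C) (U1 \<inter> S)" unfolding connectedin_subtopology using Kc KC by blast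
    show "U1 \<inter> S \<subseteq> V" using KC U1(4) W0(2) by blast
    show "x \<in> U1 \<inter> S" using U1(3) xC CS by blast
    show "y \<in> U1 \<inter> S" using y O1(2) CP CS by blast
  qed
qed

lemma lc_finite_closed_union:
  assumes G: "finite \<G>" and Gcl: "\<And>G. G \<in> \<G> \<Longrightarrow> closedin T G"
    and Glc: "\<And>G. G \<in> \<G> \<Longrightarrow> locally_connected_space (subtopology T G)"
  shows "locally_connected_space (subtopology T (\<Union>\<G>))"
  unfolding locally_connected_space_im_kleinen
proof (intro allI impI, elim conjE)
  fix V x assume V: "openin (subtopology T (\<Union>\<G>)) V" and xV: "x \<in> V"
  obtain W0 where W0: "openin T W0" "V = W0 \<inter> \<Union>\<G>" using V unfolding openin_subtopology by blast
  define Gx where "Gx = {G \<in> \<G>. x \<in> G}"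
  define Gn where "Gn = {G \<in> \<G>. x \<notin> G}"
  have "closedin T (\<Union>Gn)" using G Gcl unfolding Gn_def by (intro closedin_Union) auto
  then have Oo: "openin T (W0 - \<Union>Gn)" using W0(1) by (simp add: openin_diff)
  define O' where "O' = W0 - \<Union>Gn"
  have xO: "x \<in> O'" unfolding O'_def Gn_def using xV W0(2) by blast
  have "\<forall>G\<in>Gx. \<exists>OG. openin T OG \<and> x \<in> OG \<and>
          (\<forall>y \<in> OG \<inter> G. \<exists>C'. connectedin T C' \<and> C' \<subseteq> O' \<inter> G \<and> x \<in> C' \<and> y \<in> C')"
  proof
    fix G assume GG: "G \<in> Gx"
    then have GG': "G \<in> \<G>" "x \<in> G" unfolding Gx_def by auto
    have oG: "openin (subtopology T G) (O' \<inter> G)" unfolding openin_subtopology O'_def using Oo by blast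
    have xin: "x \<in> O' \<inter> G" using xO GG'(2) by blast
    have lcG: "locally_connected_space (subtopology T G)" by (rule Glc[OF GG'(1)])
    have ex: "\<exists>U. openin (subtopology T G) U \<and> x \<in> U \<and> U \<subseteq> O' \<inter> G \<and>
      (\<forall>y\<in>U. \<exists>C'. connectedin (subtopology T G) C' \<and> C' \<subseteq> O' \<inter> G \<and> x \<in> C' \<and> y \<in> C')"
      using lcG[unfolded locally_connected_space_im_kleinen, rule_format, OF conjI[OF oG xin]] .
    then obtain U where U: "openin (subtopology T G) U" "x \<in> U" "U \<subseteq> O' \<inter> G"
      "\<forall>y\<in>U. \<exists>C'. connectedin (subtopology T G) C' \<and> C' \<subseteq> O' \<inter> G \<and> x \<in> C' \<and> y \<in> C'"
      by (elim exE conjE)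
    obtain OG where OG: "openin T OG" "U = OG \<inter> G" using U(1) unfolding openin_subtopology by blast
    show "\<exists>OG. openin T OG \<and> x \<in> OG \<and>
          (\<forall>y \<in> OG \<inter> G. \<exists>C'. connectedin T C' \<and> C' \<subseteq> O' \<inter> G \<and> x \<in> C' \<and> y \<in> C')"
    proof (rule exI, intro conjI ballI)
      show "openin T OG" by (rule OG(1))
      show "x \<in> OG" using U(2) OG(2) by blast
      fix y assume "y \<in> OG \<inter> G"
      then have "y \<in> U" using OG(2) by blast
      then obtain C' where "connectedin (subtopology T G) C'" "C' \<subseteq> O' \<inter> G" "x \<in> C'" "y \<in> C'"
        using U(4) by blast
      then show "\<exists>C'. connectedin T C' \<and> C' \<subseteq> O' \<inter> G \<and> x \<in> C' \<and> y \<in> C'"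
        unfolding connectedin_subtopology by blast
    qed
  qed
  from bchoice[OF this] obtain f where f0: "\<forall>G\<in>Gx. openin T (f G) \<and> x \<in> f G \<and>
          (\<forall>y \<in> f G \<inter> G. \<exists>C'. connectedin T C' \<and> C' \<subseteq> O' \<inter> G \<and> x \<in> C' \<and> y \<in> C')" ..
  have fo: "openin T (f G)" if "G \<in> Gx" for G using f0 that by blast
  have fx: "x \<in> f G" if "G \<in> Gx" for G using f0 that by blast
  have fc: "\<exists>C'. connectedin T C' \<and> C' \<subseteq> O' \<inter> G \<and> x \<in> C' \<and> y \<in> C'"
    if "G \<in> Gx" "y \<in> f G" "y \<in> G" for G y using f0 that by blast
  define U where "U = \<Inter>(insert O' (f ` Gx))"
  have Uo: "openin T U" unfolding U_def
  proof (rule openin_Inter)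
    show "finite (insert O' (f ` Gx))" using G unfolding Gx_def by simp
    show "insert O' (f ` Gx) \<noteq> {}" by simp
    fix X assume "X \<in> insert O' (f ` Gx)"
    then have "X = O' \<or> (\<exists>G\<in>Gx. X = f G)" by blast
    then show "openin T X" using Oo fo unfolding O'_def by blast
  qed
  show "\<exists>U. openin (subtopology T (\<Union>\<G>)) U \<and> x \<in> U \<and> U \<subseteq> V \<and>
          (\<forall>y\<in>U. \<exists>C'. connectedin (subtopology T (\<Union>\<G>)) C' \<and> C' \<subseteq> V \<and> x \<in> C' \<and> y \<in> C')"
  proof (rule exI, intro conjI ballI)
    show "openin (subtopology T (\<Union>\<G>)) (U \<inter> \<Union>\<G>)" unfolding openin_subtopology using Uo by blast
    have "x \<in> U" unfolding U_def using xO fx by blast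
    then show "x \<in> U \<inter> \<Union>\<G>" using xV W0(2) by blast
    show "U \<inter> \<Union>\<G> \<subseteq> V" unfolding U_def O'_def using W0(2) by blast
    fix y assume y: "y \<in> U \<inter> \<Union>\<G>"
    then obtain G where GG: "G \<in> \<G>" "y \<in> G" by blast
    have "y \<in> O'" using y unfolding U_def by blast
    then have "G \<notin> Gn" unfolding O'_def using GG by blast
    then have GGx: "G \<in> Gx" using GG unfolding Gn_def Gx_def by blast
    then have "y \<in> f G" using y unfolding U_def by blast
    then obtain C' where C': "connectedin T C'" "C' \<subseteq> O' \<inter> G" "x \<in> C'" "y \<in> C'"
      using fc[OF GGx] GG by blast
    show "\<exists>C'. connectedin (subtopology T (\<Union>\<G>)) C' \<and> C' \<subseteq> V \<and> x \<in> C' \<and> y \<in> C'"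
    proof (intro exI conjI)
      show "connectedin (subtopology T (\<Union>\<G>)) C'" unfolding connectedin_subtopology using C' GG by blast
      show "C' \<subseteq> V" using C'(2) GG W0(2) unfolding O'_def by blast
    qed (use C' in auto)
  qed
qed




lemma decomp_proj_eq:
  assumes D: "monotone_decomp K D" and d: "d \<in> D" and x: "x \<in> d"
  shows "decomp_proj D x = d"
proof -
  have disj: "\<forall>d\<in>D. \<forall>e\<in>D. d \<noteq> e \<longrightarrow> d \<inter> e = {}" using D unfolding monotone_decomp_def by blast
  show ?thesis unfolding decomp_proj_def
  proof (rule the_equality)
    show "d \<in> D \<and> x \<in> d" using d x by blast
    fix e assume "e \<in> D \<and> x \<in> e"
    then show "e = d" using disj d x by blast
  qed
qed

lemma decomp_proj_in:
  assumes D: "monotone_decomp K D" and x: "x \<in> K"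
  shows "decomp_proj D x \<in> D" "x \<in> decomp_proj D x"
proof -
  have "\<Union>D = K" using D unfolding monotone_decomp_def by blast
  then obtain d where d: "d \<in> D" "x \<in> d" using x by blast
  then show "decomp_proj D x \<in> D" "x \<in> decomp_proj D x" using decomp_proj_eq[OF D d] by auto
qed

lemma openin_decomp_topology:
  "openin (decomp_topology K D) W \<longleftrightarrow> W \<subseteq> D \<and> openin (top_of_set K) {x \<in> K. decomp_proj D x \<in> W}"
  unfolding decomp_topology_def topology_inverse'[OF istopology_decomp[of D K]] by (rule refl)

lemma topspace_decomp_topology:
  assumes D: "monotone_decomp K D"
  shows "topspace (decomp_topology K D) = D"
proof -
  have "{x \<in> K. decomp_proj D x \<in> D} = K" using decomp_proj_in[OF D] by blast
  then have "openin (decomp_topology K D) D" unfolding openin_decomp_topology by simp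
  then have "D \<subseteq> topspace (decomp_topology K D)" by (rule openin_subset)
  moreover have "topspace (decomp_topology K D) \<subseteq> D"
    using openin_topspace[of "decomp_topology K D"] unfolding openin_decomp_topology by blast
  ultimately show ?thesis by blast
qed

lemma decomp_elem:
  assumes D: "monotone_decomp K D" and d: "d \<in> D"
  shows "d \<noteq> {}" "compact d" "connected d" "d \<subseteq> K"
proof -
  have "\<forall>d\<in>D. d \<noteq> {} \<and> compact d \<and> connected d" using D unfolding monotone_decomp_def by simp
  have "\<Union>D = K" using D unfolding monotone_decomp_def by simp
  then show "d \<noteq> {}" "compact d" "connected d" "d \<subseteq> K" using d \<open>\<forall>d\<in>D. d \<noteq> {} \<and> compact d \<and> connected d\<close> by auto
qed

lemma continuous_decomp_proj:
  assumes D: "monotone_decomp K D"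
  shows "continuous_map (top_of_set K) (decomp_topology K D) (decomp_proj D)"
  unfolding continuous_map
proof (intro conjI allI impI)
  show "decomp_proj D ` topspace (top_of_set K) \<subseteq> topspace (decomp_topology K D)"
    using decomp_proj_in[OF D] topspace_decomp_topology[OF D] by auto
  fix U assume "openin (decomp_topology K D) U"
  then show "openin (top_of_set K) {x \<in> topspace (top_of_set K). decomp_proj D x \<in> U}"
    unfolding openin_decomp_topology by simp
qed

lemma decomp_proj_image:
  assumes D: "monotone_decomp K D"
  shows "decomp_proj D ` K = D"
proof
  show "decomp_proj D ` K \<subseteq> D" using decomp_proj_in[OF D] by blast
  show "D \<subseteq> decomp_proj D ` K"
  proof
    fix d assume d: "d \<in> D"
    then obtain x where "x \<in> d" using decomp_elem[OF D d] by blast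
    then show "d \<in> decomp_proj D ` K" using decomp_proj_eq[OF D d] decomp_elem(4)[OF D d] by force
  qed
qed

lemma compact_space_decomp:
  assumes D: "monotone_decomp K D" and K: "compact K"
  shows "compact_space (decomp_topology K D)"
proof -
  have "compactin (top_of_set K) K" using K by (simp add: compactin_subtopology)
  then have "compactin (decomp_topology K D) (decomp_proj D ` K)"
    using continuous_decomp_proj[OF D] by (rule image_compactin)
  then show ?thesis unfolding compact_space_def using decomp_proj_image[OF D] topspace_decomp_topology[OF D] by simp
qed

lemma closed_map_decomp_proj:
  fixes K :: "'a::metric_space set"
  assumes D: "monotone_decomp K D" and K: "compact K" and C: "closedin (top_of_set K) C"
  shows "closedin (decomp_topology K D) (decomp_proj D ` C)"
proof -
  have CK: "C \<subseteq> K" using C closedin_imp_subset by blast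
  have Ccl: "closed C" using C K compact_imp_closed closedin_closed_trans by blast
  define P where "P = {x \<in> K. decomp_proj D x \<in> D - decomp_proj D ` C}"
  have "openin (top_of_set K) P"
  proof (subst openin_subopen, intro ballI)
    fix x assume x: "x \<in> P"
    then have xK: "x \<in> K" unfolding P_def by blast
    define d where "d = decomp_proj D x"
    have dD: "d \<in> D" unfolding d_def using decomp_proj_in[OF D xK] by blast
    have dC: "d \<inter> C = {}"
    proof (rule ccontr)
      assume "d \<inter> C \<noteq> {}"
      then obtain c where c: "c \<in> d" "c \<in> C" by blast
      then have "decomp_proj D c = d" using decomp_proj_eq[OF D dD] by blast
      then show False using x c(2) unfolding P_def d_def by blast
    qed
    have "open (- C)" using Ccl by blast
    moreover have "d \<subseteq> - C" using dC by blast
    ultimately obtain V where V: "open V" "d \<subseteq> V" "\<forall>e\<in>D. e \<inter> V \<noteq> {} \<longrightarrow> e \<subseteq> - C"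
      using D dD unfolding monotone_decomp_def by meson
    show "\<exists>T. openin (top_of_set K) T \<and> x \<in> T \<and> T \<subseteq> P"
    proof (intro exI conjI)
      show "openin (top_of_set K) (K \<inter> V)" using V(1) by (rule openin_open_Int)
      show "x \<in> K \<inter> V" using xK V(2) decomp_proj_in(2)[OF D xK] unfolding d_def by blast
      show "K \<inter> V \<subseteq> P"
      proof
        fix y assume y: "y \<in> K \<inter> V"
        define e where "e = decomp_proj D y"
        have eD: "e \<in> D" "y \<in> e" unfolding e_def using decomp_proj_in[OF D] y by auto
        then have eC: "e \<subseteq> - C" using V(3) y by blast
        have "e \<notin> decomp_proj D ` C"
        proof
          assume "e \<in> decomp_proj D ` C"
          then obtain c where c: "c \<in> C" "e = decomp_proj D c" by blast
          then have "c \<in> e" using decomp_proj_in(2)[OF D] CK by blast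
          then show False using eC c by blast
        qed
        then show "y \<in> P" unfolding P_def e_def using y eD(1) unfolding e_def by blast
      qed
    qed
  qed
  then have "openin (decomp_topology K D) (D - decomp_proj D ` C)"
    unfolding openin_decomp_topology P_def by blast
  moreover have "decomp_proj D ` C \<subseteq> D" using decomp_proj_in[OF D] CK by blast
  ultimately show ?thesis unfolding closedin_def topspace_decomp_topology[OF D]
    by (simp add: Diff_Diff_Int inf.absorb2)
qed

lemma monotone_decomp_subset:
  assumes D: "monotone_decomp K D" and E: "E \<subseteq> D"
  shows "monotone_decomp (\<Union>E) E"
proof -
  have a: "\<forall>d\<in>D. d \<noteq> {} \<and> compact d \<and> connected d" using D unfolding monotone_decomp_def by simp
  have b: "\<forall>d\<in>D. \<forall>e\<in>D. d \<noteq> e \<longrightarrow> d \<inter> e = {}" using D unfolding monotone_decomp_def by simp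
  have c: "\<forall>d\<in>D. \<forall>U. open U \<and> d \<subseteq> U \<longrightarrow>
        (\<exists>V. open V \<and> d \<subseteq> V \<and> (\<forall>e\<in>D. e \<inter> V \<noteq> {} \<longrightarrow> e \<subseteq> U))" using D unfolding monotone_decomp_def by simp
  have c': "\<forall>d\<in>E. \<forall>U. open U \<and> d \<subseteq> U \<longrightarrow>
        (\<exists>V. open V \<and> d \<subseteq> V \<and> (\<forall>e\<in>E. e \<inter> V \<noteq> {} \<longrightarrow> e \<subseteq> U))"
  proof (intro ballI allI impI)
    fix d U assume d: "d \<in> E" and U: "open U \<and> d \<subseteq> U"
    have dD: "d \<in> D" using d E by blast
    obtain V where "open V" "d \<subseteq> V" "\<forall>e\<in>D. e \<inter> V \<noteq> {} \<longrightarrow> e \<subseteq> U"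
      using c[rule_format, OF dD U] by (elim exE conjE)
    then show "\<exists>V. open V \<and> d \<subseteq> V \<and> (\<forall>e\<in>E. e \<inter> V \<noteq> {} \<longrightarrow> e \<subseteq> U)" using E by blast
  qed
  show ?thesis unfolding monotone_decomp_def
  proof (intro conjI)
    show "\<forall>d\<in>E. d \<noteq> {} \<and> compact d \<and> connected d" using a E by blast
    show "\<forall>d\<in>E. \<forall>e\<in>E. d \<noteq> e \<longrightarrow> d \<inter> e = {}" using b E by blast
  qed (rule refl, rule c')
qed

lemma decomp_topology_restrict:
  fixes K :: "'a::metric_space set"
  assumes D: "monotone_decomp K D" and K: "compact K" and E: "E \<subseteq> D" and K': "closed (\<Union>E)"
  shows "decomp_topology (\<Union>E) E = subtopology (decomp_topology K D) E"
proof -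
  have DE: "monotone_decomp (\<Union>E) E" using D E by (rule monotone_decomp_subset)
  have UK: "\<Union>E \<subseteq> K" using decomp_elem(4)[OF D] E by blast
  have pe: "decomp_proj E x = decomp_proj D x" if xE: "x \<in> \<Union>E" for x
  proof -
    obtain e where e: "e \<in> E" "x \<in> e" using xE by blast
    have "e \<in> D" using e E by blast
    then show ?thesis using decomp_proj_eq[OF DE e] decomp_proj_eq[OF D _ e(2)] by simp
  qed
  have "openin (decomp_topology (\<Union>E) E) W \<longleftrightarrow> openin (subtopology (decomp_topology K D) E) W" for W
  proof
    assume W: "openin (subtopology (decomp_topology K D) E) W"
    then obtain Ob where Ob: "openin (decomp_topology K D) Ob" "W = Ob \<inter> E" unfolding openin_subtopology by blast
    then obtain T where T: "open T" "{x \<in> K. decomp_proj D x \<in> Ob} = K \<inter> T"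
      unfolding openin_decomp_topology openin_open by blast
    have "{x \<in> \<Union>E. decomp_proj E x \<in> W} = \<Union>E \<inter> T"
    proof (intro set_eqI iffI)
      fix x assume x: "x \<in> {x \<in> \<Union>E. decomp_proj E x \<in> W}"
      then have xE: "x \<in> \<Union>E" by blast
      then have "decomp_proj D x \<in> Ob" using pe[OF xE] x Ob(2) by auto
      then show "x \<in> \<Union>E \<inter> T" using T(2) UK xE by blast
    next
      fix x assume x: "x \<in> \<Union>E \<inter> T"
      then have "x \<in> K" using UK by blast
      then have "decomp_proj D x \<in> Ob" using T(2) x by blast
      moreover have "decomp_proj E x \<in> E" using decomp_proj_in(1)[OF DE] x by blast
      moreover have "x \<in> \<Union>E" using x by blast
      ultimately show "x \<in> {x \<in> \<Union>E. decomp_proj E x \<in> W}" using pe[of x] Ob(2) by auto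
    qed
    then show "openin (decomp_topology (\<Union>E) E) W"
      unfolding openin_decomp_topology using Ob(2) T(1) openin_open_Int by fastforce
  next
    assume W: "openin (decomp_topology (\<Union>E) E) W"
    then have WE: "W \<subseteq> E" and Po: "openin (top_of_set (\<Union>E)) {x \<in> \<Union>E. decomp_proj E x \<in> W}"
      unfolding openin_decomp_topology by auto
    define Pw where "Pw = {x \<in> \<Union>E. decomp_proj E x \<in> W}"
    define Cc where "Cc = \<Union>E - Pw"
    have "closedin (top_of_set (\<Union>E)) Cc" unfolding Cc_def Pw_def using Po by (simp add: closedin_diff)
    then have "closed Cc" using K' closedin_closed_trans by blast
    have CcK: "Cc \<subseteq> K" using UK unfolding Cc_def by blast
    have Ccl: "closedin (top_of_set K) Cc" using closed_subset[OF CcK \<open>closed Cc\<close>] .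
    have cl: "closedin (decomp_topology K D) (decomp_proj D ` Cc)" by (rule closed_map_decomp_proj[OF D K Ccl])
    define Ob where "Ob = D - decomp_proj D ` Cc"
    have Oo: "openin (decomp_topology K D) Ob"
      unfolding Ob_def using cl topspace_decomp_topology[OF D] by (metis closedin_def)
    have "W = Ob \<inter> E"
    proof (intro set_eqI iffI)
      fix e assume eW: "e \<in> W"
      then have eE: "e \<in> E" using WE by blast
      have "e \<notin> decomp_proj D ` Cc"
      proof
        assume "e \<in> decomp_proj D ` Cc"
        then obtain c where c: "c \<in> Cc" "e = decomp_proj D c" by blast
        have "c \<in> e" using c decomp_proj_in(2)[OF D] CcK by blast
        then have "decomp_proj E c = e" using decomp_proj_eq[OF DE eE] by blast
        then have "c \<in> Pw" unfolding Pw_def using eW \<open>c \<in> e\<close> eE by blast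
        then show False using c(1) unfolding Cc_def by blast
      qed
      then show "e \<in> Ob \<inter> E" unfolding Ob_def using eE E by blast
    next
      fix e assume e: "e \<in> Ob \<inter> E"
      then obtain y where y: "y \<in> e" using decomp_elem(1)[OF DE] by blast
      have eE: "e \<in> E" using e by blast
      have py: "decomp_proj D y = e" using decomp_proj_eq[OF D _ y] eE E by blast
      have "y \<notin> Cc" using e py unfolding Ob_def by blast
      moreover have "y \<in> \<Union>E" using y eE by blast
      ultimately have "y \<in> Pw" unfolding Cc_def by blast
      then show "e \<in> W" unfolding Pw_def using decomp_proj_eq[OF DE eE y] by simp
    qed
    then show "openin (subtopology (decomp_topology K D) E) W" unfolding openin_subtopology using Oo by blast
  qed
  then show ?thesis by (simp add: topology_eq)
qed




lemma comp_eq_of_mem: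
  assumes C: "C \<in> connected_components_of X" and x: "x \<in> C"
  shows "C = connected_component_of_set X x"
proof -
  obtain a where a: "a \<in> topspace X" "C = connected_component_of_set X a"
    using C unfolding connected_components_of_def by blast
  have "x \<in> connected_component_of_set X a" using x a(2) by simp
  then have "connected_component_of X a x" by simp
  then have "connected_component_of X a = connected_component_of X x"
    by (simp add: connected_component_of_equiv)
  then show ?thesis using a(2) by simp
qed

lemma lc_singleton: "locally_connected_space (subtopology T {a})"
  unfolding locally_connected_space
proof (intro allI impI, elim conjE)
  fix V x assume V: "openin (subtopology T {a}) V" and x: "x \<in> V"
  have VT: "V \<subseteq> topspace (subtopology T {a})" using openin_subset[OF V] .
  have "V \<subseteq> {a}" using VT by auto
  then have Vx: "V = {x}" using x by blast
  have "x \<in> topspace (subtopology T {a})" using VT x by blast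
  then have "connectedin (subtopology T {a}) V" unfolding Vx by (auto simp: connectedin_sing)
  then show "\<exists>U. openin (subtopology T {a}) U \<and> connectedin (subtopology T {a}) U \<and> x \<in> U \<and> U \<subseteq> V"
    using V x by blast
qed

lemma peano_lc_all:
  assumes P: "peano_space T" and C: "C \<in> connected_components_of T"
  shows "locally_connected_space (subtopology T C)"
proof (cases "\<exists>a. C = {a}")
  case True then show ?thesis using lc_singleton by metis
next
  case False
  have "\<forall>C \<in> connected_components_of T. \<not> (\<exists>a. C = {a}) \<longrightarrow>
        locally_connected_space (subtopology T C)" using P unfolding peano_space_def by (elim conjE)
  then show ?thesis using C False by blast
qed

lemma peano_closed_subspace:
  assumes P: "peano_space T" and S: "closedin T S"
    and Fin: "finite (S \<inter> (T closure_of (topspace T - S)))"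
  shows "peano_space (subtopology T S)"
proof -
  define Bd where "Bd = S \<inter> (T closure_of (topspace T - S))"
  have SX: "S \<subseteq> topspace T" using S closedin_subset by blast
  have cT: "compact_space T" using P unfolding peano_space_def by (elim conjE)
  obtain M d where Md: "Metric_space M d" "T = Metric_space.mtopology M d"
     "\<forall>c>0. finite {C \<in> connected_components_of T. set_diam d C > c}"
    using P unfolding peano_space_def by (elim conjE exE) blast
  have cnt: "countable {C \<in> connected_components_of T. \<not> (\<exists>a. C = {a})}"
    using P unfolding peano_space_def by (elim conjE)
  interpret m: Metric_space M d by (rule Md(1))
  have MT: "M = topspace T" using Md(2) by simp
  have hT: "Hausdorff_space T" using Md(2) m.Hausdorff_space_mtopology by simp
  interpret sm: Submetric M d S by (unfold_locales) (use SX MT in blast)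
  have key: "C \<in> connected_components_of T \<or> C \<in> (\<lambda>z. connected_component_of_set (subtopology T S) z) ` Bd"
    if C: "C \<in> connected_components_of (subtopology T S)" for C
  proof (cases "C \<inter> Bd = {}")
    case True
    then show ?thesis using comp_boundary[OF cT hT S Fin C] unfolding Bd_def by blast
  next
    case False
    then obtain z where "z \<in> C" "z \<in> Bd" by blast
    then show ?thesis using comp_eq_of_mem[OF C] by blast
  qed
  have finB: "finite ((\<lambda>z. connected_component_of_set (subtopology T S) z) ` Bd)"
    using Fin unfolding Bd_def by simp
  show ?thesis unfolding peano_space_def
  proof (intro conjI)
    show "compact_space (subtopology T S)"
      using S cT by (simp add: closedin_compact_space compact_space_subtopology)
    show "\<exists>M d. Metric_space M d \<and> subtopology T S = Metric_space.mtopology M d \<and>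
       (\<forall>c>0. finite {C \<in> connected_components_of (subtopology T S). c < set_diam d C})"
    proof (intro exI conjI allI impI)
      show "Metric_space S d" by (rule sm.sub.Metric_space_axioms)
      show "subtopology T S = Metric_space.mtopology S d" using sm.mtopology_submetric Md(2) by simp
      fix c :: real assume c: "c > 0"
      have "{C \<in> connected_components_of (subtopology T S). c < set_diam d C} \<subseteq>
            {C \<in> connected_components_of T. c < set_diam d C} \<union> (\<lambda>z. connected_component_of_set (subtopology T S) z) ` Bd"
        using key by blast
      moreover have "finite ({C \<in> connected_components_of T. c < set_diam d C} \<union> (\<lambda>z. connected_component_of_set (subtopology T S) z) ` Bd)"
        using Md(3) c finB by simp
      ultimately show "finite {C \<in> connected_components_of (subtopology T S). c < set_diam d C}"
        by (rule finite_subset)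
    qed
    have "{C \<in> connected_components_of (subtopology T S). \<not> (\<exists>a. C = {a})} \<subseteq>
          {C \<in> connected_components_of T. \<not> (\<exists>a. C = {a})} \<union> (\<lambda>z. connected_component_of_set (subtopology T S) z) ` Bd"
      using key by blast
    moreover have "countable ({C \<in> connected_components_of T. \<not> (\<exists>a. C = {a})} \<union> (\<lambda>z. connected_component_of_set (subtopology T S) z) ` Bd)"
      using cnt finB by (simp add: countable_finite)
    ultimately show "countable {C \<in> connected_components_of (subtopology T S). \<not> (\<exists>a. C = {a})}"
      by (rule countable_subset)
    show "\<forall>C\<in>connected_components_of (subtopology T S). \<not> (\<exists>a. C = {a}) \<longrightarrow>
        locally_connected_space (subtopology (subtopology T S) C)"
    proof (intro ballI impI)
      fix C assume C: "C \<in> connected_components_of (subtopology T S)"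
      have CS: "C \<subseteq> S" using connected_components_of_subset[OF C] by auto
      have "locally_connected_space (subtopology T C)"
        using lc_component_closed[OF hT S Fin C peano_lc_all[OF P]] .
      then show "locally_connected_space (subtopology (subtopology T S) C)"
        using CS by (simp add: subtopology_subtopology inf.absorb2)
    qed
  qed
qed




locale glue_side =
  fixes X Y :: "'a set" and dX dY :: "'a \<Rightarrow> 'a \<Rightarrow> real" and k MX :: real
  assumes mX: "Metric_space X dX" and mY: "Metric_space Y dY"
   and finF: "finite (X \<inter> Y)"
   and MXpos: "MX > 0" and MXb: "\<And>p q. p \<in> X \<Longrightarrow> q \<in> X \<Longrightarrow> dX p q \<le> MX"
   and kpos: "k > 0" and ksep: "\<And>x y. x \<in> X \<inter> Y \<Longrightarrow> y \<in> X \<inter> Y \<Longrightarrow> x \<noteq> y \<Longrightarrow> 1 \<le> k * dY x y"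
begin

definition beta :: "'a \<Rightarrow> 'a \<Rightarrow> real" where "beta x q = max 0 (1 - k * dY q x)"
definition u :: "'a \<Rightarrow> 'a \<Rightarrow> real" where
  "u a q = (if q \<in> X then dX a q else (\<Sum>x\<in>X \<inter> Y. dX a x * beta x q))"
definition s :: "'a \<Rightarrow> 'a \<Rightarrow> real" where
  "s p q = Sup (insert 0 ((\<lambda>a. \<bar>u a p - u a q\<bar>) ` X))"
definition m :: "'a \<Rightarrow> real" where "m q = Min (insert 1 ((\<lambda>x. dX q x) ` (X \<inter> Y)))"

lemma dX_nonneg: "0 \<le> dX p q" using Metric_space.nonneg[OF mX] .
lemma dY_nonneg: "0 \<le> dY p q" using Metric_space.nonneg[OF mY] .

lemma beta_bounds: "0 \<le> beta x q" "beta x q \<le> 1"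
  unfolding beta_def using kpos dY_nonneg[of q x] by (auto simp: mult_nonneg_nonneg)

lemma beta_F: assumes "x \<in> X \<inter> Y" "q \<in> X \<inter> Y" shows "beta x q = (if x = q then 1 else 0)"
proof (cases "x = q")
  case True
  then have "dY q x = 0" using assms Metric_space.mdist_zero[OF mY] by auto
  then show ?thesis unfolding beta_def using True by simp
next
  case False
  have "1 \<le> k * dY q x" using ksep[of q x] assms False by auto
  then show ?thesis unfolding beta_def using False by simp
qed

lemma beta_lip: assumes "p \<in> Y" "q \<in> Y" "x \<in> Y" shows "\<bar>beta x p - beta x q\<bar> \<le> k * dY p q"
proof -
  have "\<bar>dY p x - dY q x\<bar> \<le> dY p q"
    using Metric_space.mdist_reverse_triangle[OF mY, of p x q] Metric_space.commute[OF mY, of x q] assms by simp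
  then have "\<bar>k * dY p x - k * dY q x\<bar> \<le> k * dY p q"
    using kpos by (metis abs_mult abs_of_pos mult_le_cancel_left_pos right_diff_distrib)
  then show ?thesis unfolding beta_def by linarith
qed

lemma u_Y: assumes "q \<in> Y" shows "u a q = (\<Sum>x\<in>X \<inter> Y. dX a x * beta x q)"
proof (cases "q \<in> X")
  case True
  then have qF: "q \<in> X \<inter> Y" using assms by blast
  have "(\<Sum>x\<in>X \<inter> Y. dX a x * beta x q) = (\<Sum>x\<in>X \<inter> Y. if x = q then dX a x else 0)"
    by (rule sum.cong) (use beta_F qF in auto)
  also have "\<dots> = dX a q" using finF qF by simp
  finally show ?thesis unfolding u_def using True by simp
qed (simp add: u_def)

definition NX where "NX = MX * (1 + real (card (X \<inter> Y)))"

lemma u_bounds: assumes a: "a \<in> X" shows "0 \<le> u a q" "u a q \<le> NX"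
proof -
  have "(\<Sum>x\<in>X \<inter> Y. dX a x * beta x q) \<le> (\<Sum>x\<in>X \<inter> Y. MX)"
  proof (rule sum_mono)
    fix x assume x: "x \<in> X \<inter> Y"
    have "dX a x * beta x q \<le> MX * 1"
      by (rule mult_mono) (use MXb[of a x] a x beta_bounds[of x q] MXpos in auto)
    then show "dX a x * beta x q \<le> MX" by simp
  qed
  then have s1: "(\<Sum>x\<in>X \<inter> Y. dX a x * beta x q) \<le> MX * real (card (X \<inter> Y))" by (simp add: mult.commute)
  have s0: "0 \<le> (\<Sum>x\<in>X \<inter> Y. dX a x * beta x q)"
    by (rule sum_nonneg) (use dX_nonneg beta_bounds in auto)
  show "0 \<le> u a q" unfolding u_def using s0 dX_nonneg by simp
  have "MX \<le> NX" "MX * real (card (X \<inter> Y)) \<le> NX" unfolding NX_def using MXpos by (auto simp: algebra_simps)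
  then show "u a q \<le> NX" unfolding u_def using s1 MXb[OF a, of q] by (cases "q \<in> X") auto
qed

lemma u_diff_bound: assumes "a \<in> X" shows "\<bar>u a p - u a q\<bar> \<le> NX"
  using u_bounds[OF assms, of p] u_bounds[OF assms, of q] by linarith

lemma s_bdd: "bdd_above (insert 0 ((\<lambda>a. \<bar>u a p - u a q\<bar>) ` X))"
  unfolding bdd_above_def using u_diff_bound MXpos
  by (intro exI[of _ NX]) (auto simp: NX_def)

lemma s_upper: "a \<in> X \<Longrightarrow> \<bar>u a p - u a q\<bar> \<le> s p q"
  unfolding s_def by (rule cSup_upper[OF _ s_bdd]) blast

lemma s_nonneg: "0 \<le> s p q"
  unfolding s_def by (rule cSup_upper[OF _ s_bdd]) blast

lemma s_least: "0 \<le> c \<Longrightarrow> (\<And>a. a \<in> X \<Longrightarrow> \<bar>u a p - u a q\<bar> \<le> c) \<Longrightarrow> s p q \<le> c"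
  unfolding s_def by (rule cSup_least) auto

lemma s_commute: "s p q = s q p"
  unfolding s_def by (simp add: abs_minus_commute)

lemma s_refl: "s p p = 0"
  using s_least[of 0 p p] s_nonneg[of p p] by simp

lemma s_triangle: "s p r \<le> s p q + s q r"
proof (rule s_least)
  show "0 \<le> s p q + s q r" using s_nonneg by (simp add: add_nonneg_nonneg)
  fix a assume a: "a \<in> X"
  have "\<bar>u a p - u a r\<bar> \<le> \<bar>u a p - u a q\<bar> + \<bar>u a q - u a r\<bar>" by linarith
  then show "\<bar>u a p - u a r\<bar> \<le> s p q + s q r" using s_upper[OF a, of p q] s_upper[OF a, of q r] by linarith
qed

lemma s_lip_X: assumes "p \<in> X" "q \<in> X" shows "s p q \<le> dX p q"
proof (rule s_least)
  show "0 \<le> dX p q" by (rule dX_nonneg)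
  fix a assume a: "a \<in> X"
  have "\<bar>dX a p - dX p q\<bar> \<le> dX a q"
    using Metric_space.mdist_reverse_triangle[OF mX, of a p q] assms a by simp
  moreover have "\<bar>dX a q - dX p q\<bar> \<le> dX a p"
    using Metric_space.mdist_reverse_triangle[OF mX, of a q p] Metric_space.commute[OF mX, of q p] assms a by simp
  ultimately have "\<bar>dX a p - dX a q\<bar> \<le> dX p q" by linarith
  then show "\<bar>u a p - u a q\<bar> \<le> dX p q" unfolding u_def using assms by simp
qed

lemma s_lip_Y: assumes "p \<in> Y" "q \<in> Y" shows "s p q \<le> real (card (X \<inter> Y)) * MX * k * dY p q"
proof (rule s_least)
  show "0 \<le> real (card (X \<inter> Y)) * MX * k * dY p q"
    using MXpos kpos dY_nonneg by simp
  fix a assume a: "a \<in> X"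
  have "\<bar>u a p - u a q\<bar> = \<bar>\<Sum>x\<in>X \<inter> Y. dX a x * (beta x p - beta x q)\<bar>"
    unfolding u_Y[OF assms(1)] u_Y[OF assms(2)] by (simp add: sum_subtractf right_diff_distrib)
  also have "\<dots> \<le> (\<Sum>x\<in>X \<inter> Y. \<bar>dX a x * (beta x p - beta x q)\<bar>)" by (rule sum_abs)
  also have "\<dots> \<le> (\<Sum>x\<in>X \<inter> Y. MX * (k * dY p q))"
  proof (rule sum_mono)
    fix x assume x: "x \<in> X \<inter> Y"
    have "\<bar>dX a x * (beta x p - beta x q)\<bar> = dX a x * \<bar>beta x p - beta x q\<bar>"
      using dX_nonneg by (simp add: abs_mult)
    also have "\<dots> \<le> MX * (k * dY p q)"
      by (rule mult_mono) (use MXb[of a x] a x beta_lip[of p q x] assms MXpos in auto)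
    finally show "\<bar>dX a x * (beta x p - beta x q)\<bar> \<le> MX * (k * dY p q)" .
  qed
  also have "\<dots> = real (card (X \<inter> Y)) * MX * k * dY p q" by simp
  finally show "\<bar>u a p - u a q\<bar> \<le> real (card (X \<inter> Y)) * MX * k * dY p q" .
qed

lemma s_pos: assumes "p \<in> X" "q \<in> X" "p \<noteq> q" shows "0 < s p q"
proof -
  have "\<bar>u p p - u p q\<bar> \<le> s p q" by (rule s_upper[OF assms(1)])
  moreover have "u p p = 0" unfolding u_def using assms Metric_space.mdist_zero[OF mX] by simp
  moreover have "u p q = dX p q" unfolding u_def using assms by simp
  moreover have "0 < dX p q" using Metric_space.mdist_pos_less[OF mX] assms by blast
  ultimately show ?thesis by linarith
qed

lemma m_in: "m q \<in> insert 1 ((\<lambda>x. dX q x) ` (X \<inter> Y))"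
  unfolding m_def by (rule Min_in) (use finF in auto)

lemma m_le: "y \<in> insert 1 ((\<lambda>x. dX q x) ` (X \<inter> Y)) \<Longrightarrow> m q \<le> y"
  unfolding m_def by (rule Min_le) (use finF in auto)

lemma m_nonneg: "0 \<le> m q"
  using m_in[of q] dX_nonneg by auto

lemma m_F: assumes "q \<in> X \<inter> Y" shows "m q = 0"
proof -
  have "m q \<le> dX q q" by (rule m_le) (use assms in blast)
  then show ?thesis using m_nonneg[of q] Metric_space.mdist_zero[OF mX, of q] assms by simp
qed

lemma m_pos: assumes "q \<in> X" "q \<notin> Y" shows "0 < m q"
proof -
  have "m q \<in> insert 1 ((\<lambda>x. dX q x) ` (X \<inter> Y))" by (rule m_in)
  then consider "m q = 1" | x where "x \<in> X \<inter> Y" "m q = dX q x" by blast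
  then show ?thesis
  proof cases
    case 2
    then have "q \<noteq> x" using assms by blast
    then show ?thesis using 2 Metric_space.mdist_pos_less[OF mX] assms by simp
  qed simp
qed

lemma m_lip1: assumes "p \<in> X" "q \<in> X" shows "m p \<le> m q + dX p q"
proof -
  have "m q \<in> insert 1 ((\<lambda>x. dX q x) ` (X \<inter> Y))" by (rule m_in)
  then consider "m q = 1" | x where "x \<in> X \<inter> Y" "m q = dX q x" by blast
  then show ?thesis
  proof cases
    case 1
    have "m p \<le> 1" by (rule m_le) simp
    then show ?thesis using 1 dX_nonneg[of p q] by simp
  next
    case 2
    have "m p \<le> dX p x" by (rule m_le) (use 2 in blast)
    moreover have "dX p x \<le> dX p q + dX q x" using Metric_space.triangle[OF mX] assms 2 by blast
    ultimately show ?thesis using 2 by simp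
  qed
qed

lemma m_lip: assumes "p \<in> X" "q \<in> X" shows "\<bar>m p - m q\<bar> \<le> dX p q"
  using m_lip1[OF assms] m_lip1[OF assms(2,1)] Metric_space.commute[OF mX, of q p] by linarith

end


lemma sep_const:
  assumes m: "Metric_space X d" and F: "finite F" "F \<subseteq> X"
  shows "\<exists>k>0. \<forall>x\<in>F. \<forall>y\<in>F. x \<noteq> y \<longrightarrow> 1 \<le> k * d x y"
proof -
  define P where "P = {(x,y). x \<in> F \<and> y \<in> F \<and> x \<noteq> y}"
  have finP: "finite P" unfolding P_def using finite_cartesian_product[OF F(1) F(1)]
    by (rule finite_subset[rotated]) auto
  define k where "k = 1 + (\<Sum>(x,y)\<in>P. 1 / d x y)"
  have nn: "\<And>z. z \<in> P \<Longrightarrow> 0 \<le> (\<lambda>(x,y). 1 / d x y) z"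
    using Metric_space.nonneg[OF m] by auto
  have k0: "0 \<le> (\<Sum>(x,y)\<in>P. 1 / d x y)" using nn by (intro sum_nonneg) auto
  show ?thesis
  proof (intro exI conjI ballI impI)
    show "k > 0" unfolding k_def using k0 by simp
    fix x y assume xy: "x \<in> F" "y \<in> F" "x \<noteq> y"
    then have "(x,y) \<in> P" unfolding P_def by simp
    then have "(\<lambda>(x,y). 1 / d x y) (x,y) \<le> (\<Sum>(x,y)\<in>P. 1 / d x y)"
      by (rule member_le_sum) (use nn finP in auto)
    then have "1 / d x y \<le> k" unfolding k_def by simp
    moreover have "0 < d x y" using Metric_space.mdist_pos_less[OF m] xy F(2) by blast
    ultimately show "1 \<le> k * d x y" by (simp add: divide_le_eq)
  qed
qed

lemma glue_metric:
  assumes mA: "Metric_space A dA" and mB: "Metric_space B dB" and F: "finite (A \<inter> B)"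
   and MA: "MA > 0" and bA: "\<And>p q. p \<in> A \<Longrightarrow> q \<in> A \<Longrightarrow> dA p q \<le> MA"
   and MB: "MB > 0" and bB: "\<And>p q. p \<in> B \<Longrightarrow> q \<in> B \<Longrightarrow> dB p q \<le> MB"
  shows "\<exists>\<rho> LA LB. Metric_space (A \<union> B) \<rho> \<and> LA > 0 \<and> LB > 0 \<and>
           (\<forall>p\<in>A. \<forall>q\<in>A. \<rho> p q \<le> LA * dA p q) \<and> (\<forall>p\<in>B. \<forall>q\<in>B. \<rho> p q \<le> LB * dB p q)"
proof -
  obtain kA where kA: "kA > 0" "\<forall>x\<in>A \<inter> B. \<forall>y\<in>A \<inter> B. x \<noteq> y \<longrightarrow> 1 \<le> kA * dA x y"
    using sep_const[OF mA F] by blast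
  obtain kB where kB: "kB > 0" "\<forall>x\<in>A \<inter> B. \<forall>y\<in>A \<inter> B. x \<noteq> y \<longrightarrow> 1 \<le> kB * dB x y"
    using sep_const[OF mB F] by blast
  interpret gA: glue_side A B dA dB kB MA
    by (rule glue_side.intro[OF mA mB F MA bA kB(1)]) (use kB(2) in auto)
  have F': "finite (B \<inter> A)" using F by (simp add: Int_commute)
  interpret gB: glue_side B A dB dA kA MB
    by (rule glue_side.intro[OF mB mA F' MB bB kA(1)]) (use kA(2) in auto)
  define chi where "chi q = (if q \<in> A then gA.m q else - gB.m q)" for q
  define \<rho> where "\<rho> p q = gA.s p q + gB.s p q + \<bar>chi p - chi q\<bar>" for p q
  have chiB: "chi q = - gB.m q" if "q \<in> B" for q
  proof (cases "q \<in> A")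
    case True
    then have "gA.m q = 0" "gB.m q = 0" using that gA.m_F gB.m_F by auto
    then show ?thesis unfolding chi_def by simp
  qed (simp add: chi_def)
  have chiA: "chi q = gA.m q" if "q \<in> A" for q using that unfolding chi_def by simp
  define LA where "LA = 2 + real (card (B \<inter> A)) * MB * kA"
  define LB where "LB = 2 + real (card (A \<inter> B)) * MA * kB"
  have LA: "LA > 0" unfolding LA_def using MB kA by (simp add: add_pos_nonneg)
  have LB: "LB > 0" unfolding LB_def using MA kB by (simp add: add_pos_nonneg)
  have lipA: "\<rho> p q \<le> LA * dA p q" if "p \<in> A" "q \<in> A" for p q
  proof -
    have "gA.s p q \<le> dA p q" by (rule gA.s_lip_X[OF that])
    moreover have "gB.s p q \<le> real (card (B \<inter> A)) * MB * kA * dA p q" by (rule gB.s_lip_Y[OF that])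
    moreover have "\<bar>chi p - chi q\<bar> \<le> dA p q" using chiA that gA.m_lip[OF that] by simp
    ultimately have "\<rho> p q \<le> dA p q + real (card (B \<inter> A)) * MB * kA * dA p q + dA p q"
      unfolding \<rho>_def by linarith
    also have "\<dots> = LA * dA p q" unfolding LA_def by (simp add: algebra_simps)
    finally show ?thesis .
  qed
  have lipB: "\<rho> p q \<le> LB * dB p q" if "p \<in> B" "q \<in> B" for p q
  proof -
    have "gB.s p q \<le> dB p q" by (rule gB.s_lip_X[OF that])
    moreover have "gA.s p q \<le> real (card (A \<inter> B)) * MA * kB * dB p q" by (rule gA.s_lip_Y[OF that])
    moreover have "\<bar>chi p - chi q\<bar> \<le> dB p q" using chiB that gB.m_lip[OF that] by (simp add: abs_minus_commute)
    ultimately have "\<rho> p q \<le> dB p q + real (card (A \<inter> B)) * MA * kB * dB p q + dB p q"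
      unfolding \<rho>_def by linarith
    also have "\<dots> = LB * dB p q" unfolding LB_def by (simp add: algebra_simps)
    finally show ?thesis .
  qed
  have rnn: "0 \<le> \<rho> p q" for p q unfolding \<rho>_def using gA.s_nonneg gB.s_nonneg
    by (simp add: add_nonneg_nonneg)
  have rcomm: "\<rho> p q = \<rho> q p" for p q unfolding \<rho>_def
    using gA.s_commute gB.s_commute by (simp add: abs_minus_commute)
  have rtri: "\<rho> p r \<le> \<rho> p q + \<rho> q r" for p q r
  proof -
    have "\<bar>chi p - chi r\<bar> \<le> \<bar>chi p - chi q\<bar> + \<bar>chi q - chi r\<bar>" by linarith
    then show ?thesis unfolding \<rho>_def using gA.s_triangle[of p r q] gB.s_triangle[of p r q] by linarith
  qed
  have rrefl: "\<rho> p p = 0" for p unfolding \<rho>_def using gA.s_refl gB.s_refl by simp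
  have rpos: "0 < \<rho> p q" if pq: "p \<in> A \<union> B" "q \<in> A \<union> B" "p \<noteq> q" for p q
  proof -
    have g: "gA.s p q \<le> \<rho> p q" "gB.s p q \<le> \<rho> p q" "\<bar>chi p - chi q\<bar> \<le> \<rho> p q"
      unfolding \<rho>_def using gA.s_nonneg gB.s_nonneg by auto
    show ?thesis
    proof (cases "p \<in> A \<and> q \<in> A")
      case True then show ?thesis using gA.s_pos[of p q] pq g by linarith
    next
      case nA: False
      show ?thesis
      proof (cases "p \<in> B \<and> q \<in> B")
        case True then show ?thesis using gB.s_pos[of p q] pq g by linarith
      next
        case False
        then consider "p \<in> A" "p \<notin> B" "q \<in> B" "q \<notin> A" | "q \<in> A" "q \<notin> B" "p \<in> B" "p \<notin> A"
          using nA pq by blast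
        then show ?thesis
        proof cases
          case 1
          then have "chi p > 0" "chi q < 0" using chiA chiB gA.m_pos gB.m_pos by auto
          then show ?thesis using g by linarith
        next
          case 2
          then have "chi q > 0" "chi p < 0" using chiA chiB gA.m_pos gB.m_pos by auto
          then show ?thesis using g by linarith
        qed
      qed
    qed
  qed
  have "Metric_space (A \<union> B) \<rho>"
  proof
    show "0 \<le> \<rho> x y" for x y by (rule rnn)
    show "\<rho> x y = \<rho> y x" for x y by (rule rcomm)
    show "\<rho> x y = 0 \<longleftrightarrow> x = y" if "x \<in> A \<union> B" "y \<in> A \<union> B" for x y
      using rpos[OF that] rrefl by force
    show "\<rho> x z \<le> \<rho> x y + \<rho> y z" for x y z by (rule rtri)
  qed
  then show ?thesis using LA LB lipA lipB by blast
qed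




lemma peano_metric_data:
  assumes P: "peano_space (subtopology T A)" and AT: "A \<subseteq> topspace T"
  obtains dA MA where "Metric_space A dA" "subtopology T A = Metric_space.mtopology A dA"
    "\<forall>c>0. finite {C \<in> connected_components_of (subtopology T A). c < set_diam dA C}"
    "MA > 0" "\<And>p q. p \<in> A \<Longrightarrow> q \<in> A \<Longrightarrow> dA p q \<le> MA"
proof -
  have cA: "compact_space (subtopology T A)" using P unfolding peano_space_def by (elim conjE)
  obtain M d where Md: "Metric_space M d" "subtopology T A = Metric_space.mtopology M d"
     "\<forall>c>0. finite {C \<in> connected_components_of (subtopology T A). c < set_diam d C}"
    using P unfolding peano_space_def by (elim conjE exE) blast
  interpret m: Metric_space M d by (rule Md(1))
  have "M = topspace (subtopology T A)" using Md(2) by simp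
  then have MA: "M = A" using AT by auto
  have "compactin m.mtopology M" using cA Md(2) unfolding compact_space_def by simp
  then have "m.mbounded M" by (rule m.compactin_imp_mbounded)
  then obtain B where B: "B > 0" "\<forall>x\<in>M. \<forall>y\<in>M. d x y \<le> B" unfolding m.mbounded_alt_pos by blast
  show ?thesis
  proof (rule that)
    show "Metric_space A d" using Md(1) MA by simp
    show "subtopology T A = Metric_space.mtopology A d" using Md(2) MA by simp
    show "\<forall>c>0. finite {C \<in> connected_components_of (subtopology T A). c < set_diam d C}" by (rule Md(3))
    show "B > 0" by (rule B(1))
    show "d p q \<le> B" if "p \<in> A" "q \<in> A" for p q using B(2) that MA by blast
  qed
qed

lemma diam_transfer:
  assumes C: "C \<noteq> {}" "C \<subseteq> A" and L: "L > 0" and lip: "\<forall>p\<in>A. \<forall>q\<in>A. \<rho> p q \<le> L * dA p q"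
    and bd: "\<And>p q. p \<in> A \<Longrightarrow> q \<in> A \<Longrightarrow> dA p q \<le> M"
    and c: "c < set_diam \<rho> C"
  shows "c / L < set_diam dA C"
proof -
  have ne: "{\<rho> x y | x y. x \<in> C \<and> y \<in> C} \<noteq> {}" using C by blast
  obtain z where z: "z \<in> {\<rho> x y | x y. x \<in> C \<and> y \<in> C}" "c < z"
    using less_cSupD[OF ne] c unfolding set_diam_def by blast
  then obtain x y where xy: "x \<in> C" "y \<in> C" "c < \<rho> x y" by blast
  have "\<rho> x y \<le> L * dA x y" using lip xy C by blast
  then have "c < L * dA x y" using xy by linarith
  then have "c / L < dA x y" using L by (simp add: divide_less_eq mult.commute)
  moreover have "dA x y \<le> set_diam dA C" unfolding set_diam_def
  proof (rule cSup_upper)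
    show "dA x y \<in> {dA x y | x y. x \<in> C \<and> y \<in> C}" using xy by blast
    show "bdd_above {dA x y | x y. x \<in> C \<and> y \<in> C}"
      unfolding bdd_above_def using bd C by blast
  qed
  ultimately show ?thesis by linarith
qed


lemma union_metric:
  assumes cT: "compact_space T" and A: "closedin T A" and B: "closedin T B"
    and AB: "A \<union> B = topspace T" and F: "finite (A \<inter> B)"
    and mA: "Metric_space A dA" and tA: "subtopology T A = Metric_space.mtopology A dA"
    and MA: "MA > 0" and bA: "\<And>p q. p \<in> A \<Longrightarrow> q \<in> A \<Longrightarrow> dA p q \<le> MA"
    and mB: "Metric_space B dB" and tB: "subtopology T B = Metric_space.mtopology B dB"
    and MB: "MB > 0" and bB: "\<And>p q. p \<in> B \<Longrightarrow> q \<in> B \<Longrightarrow> dB p q \<le> MB"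
  obtains \<rho> LA LB where "Metric_space (topspace T) \<rho>" "T = Metric_space.mtopology (topspace T) \<rho>"
    "LA > 0" "LB > 0" "\<forall>p\<in>A. \<forall>q\<in>A. \<rho> p q \<le> LA * dA p q" "\<forall>p\<in>B. \<forall>q\<in>B. \<rho> p q \<le> LB * dB p q"
proof -
  obtain \<rho> LA LB where G: "Metric_space (A \<union> B) \<rho>" "LA > 0" "LB > 0"
     "\<forall>p\<in>A. \<forall>q\<in>A. \<rho> p q \<le> LA * dA p q" "\<forall>p\<in>B. \<forall>q\<in>B. \<rho> p q \<le> LB * dB p q"
    using glue_metric[OF mA mB F MA bA MB bB] by blast
  have Mr: "Metric_space (topspace T) \<rho>" using G(1) AB by simp
  interpret mA': Metric_space A dA by (rule mA)
  interpret mB': Metric_space B dB by (rule mB)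
  have ballA: "\<exists>OA. openin T OA \<and> q \<in> OA \<and> (\<forall>z\<in>OA \<inter> A. dA q z < r)" if "q \<in> A" "r > 0" for q r
  proof -
    have "openin (subtopology T A) (mA'.mball q r)" using tA by simp
    then obtain OA where OA: "openin T OA" "mA'.mball q r = OA \<inter> A" unfolding openin_subtopology by blast
    have "q \<in> mA'.mball q r" using that by simp
    then show ?thesis using OA by (intro exI[of _ OA]) auto
  qed
  have ballB: "\<exists>OB. openin T OB \<and> q \<in> OB \<and> (\<forall>z\<in>OB \<inter> B. dB q z < r)" if "q \<in> B" "r > 0" for q r
  proof -
    have "openin (subtopology T B) (mB'.mball q r)" using tB by simp
    then obtain OB where OB: "openin T OB" "mB'.mball q r = OB \<inter> B" unfolding openin_subtopology by blast
    have "q \<in> mB'.mball q r" using that by simp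
    then show ?thesis using OB by (intro exI[of _ OB]) auto
  qed
  have H: "\<exists>U. openin T U \<and> q \<in> U \<and> (\<forall>z\<in>U. \<rho> q z < e)" if q: "q \<in> topspace T" and e: "e > 0" for q e
  proof -
    have eA: "e / LA > 0" using e G(2) by simp
    have eB: "e / LB > 0" using e G(3) by simp
    obtain UA where UA: "openin T UA" "q \<in> UA" "\<And>z. z \<in> UA \<Longrightarrow> z \<in> A \<Longrightarrow> q \<in> A \<and> dA q z < e / LA"
    proof (cases "q \<in> A")
      case True
      then obtain OA where "openin T OA" "q \<in> OA" "\<forall>z\<in>OA \<inter> A. dA q z < e / LA" using ballA eA by blast
      then show ?thesis using that True by blast
    next
      case False
      have "openin T (topspace T - A)" using A by blast
      then show ?thesis using that[of "topspace T - A"] q False by blast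
    qed
    obtain UB where UB: "openin T UB" "q \<in> UB" "\<And>z. z \<in> UB \<Longrightarrow> z \<in> B \<Longrightarrow> q \<in> B \<and> dB q z < e / LB"
    proof (cases "q \<in> B")
      case True
      then obtain OB where "openin T OB" "q \<in> OB" "\<forall>z\<in>OB \<inter> B. dB q z < e / LB" using ballB eB by blast
      then show ?thesis using that True by blast
    next
      case False
      have "openin T (topspace T - B)" using B by blast
      then show ?thesis using that[of "topspace T - B"] q False by blast
    qed
    show ?thesis
    proof (intro exI conjI ballI)
      show "openin T (UA \<inter> UB)" using UA(1) UB(1) by (rule openin_Int)
      show "q \<in> UA \<inter> UB" using UA(2) UB(2) by blast
      fix z assume z: "z \<in> UA \<inter> UB"
      then have "z \<in> topspace T" using openin_subset[OF UA(1)] by blast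
      then have "z \<in> A \<or> z \<in> B" using AB by blast
      then show "\<rho> q z < e"
      proof
        assume zA: "z \<in> A"
        then have "q \<in> A" "dA q z < e / LA" using UA(3) z by auto
        moreover have "\<rho> q z \<le> LA * dA q z" using G(4) zA \<open>q \<in> A\<close> by blast
        moreover have "LA * dA q z < LA * (e / LA)" using calculation(2) G(2) by (rule mult_strict_left_mono)
        ultimately show ?thesis using G(2) by simp
      next
        assume zB: "z \<in> B"
        then have "q \<in> B" "dB q z < e / LB" using UB(3) z by auto
        moreover have "\<rho> q z \<le> LB * dB q z" using G(5) zB \<open>q \<in> B\<close> by blast
        moreover have "LB * dB q z < LB * (e / LB)" using calculation(2) G(3) by (rule mult_strict_left_mono)
        ultimately show ?thesis using G(3) by simp
      qed
    qed
  qed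
  have "T = Metric_space.mtopology (topspace T) \<rho>"
    by (rule metric_topology_eqI[OF cT Mr H])
  then show ?thesis using that Mr G(2-5) by blast
qed


lemma comp_in_one_side:
  assumes C: "C \<in> connected_components_of T" and A: "closedin T A" and B: "closedin T B"
    and AB: "A \<union> B = topspace T" and dis: "C \<inter> (A \<inter> B) = {}"
  shows "(C \<subseteq> A \<and> C \<in> connected_components_of (subtopology T A)) \<or>
         (C \<subseteq> B \<and> C \<in> connected_components_of (subtopology T B))"
proof -
  have Cc: "connectedin T C" using C by (rule connectedin_connected_components_of)
  have CT: "C \<subseteq> topspace T" using C by (rule connected_components_of_subset)
  have "\<not> (A \<inter> C \<noteq> {} \<and> B \<inter> C \<noteq> {})"
  proof
    assume h: "A \<inter> C \<noteq> {} \<and> B \<inter> C \<noteq> {}"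
    have "C \<subseteq> A \<union> B" using CT AB by blast
    moreover have "A \<inter> B \<inter> C = {}" using dis by blast
    ultimately show False using Cc A B h unfolding connectedin_closedin by blast
  qed
  then have "C \<subseteq> A \<or> C \<subseteq> B" using CT AB by blast
  then show ?thesis using connected_components_of_subtopology[OF C] by blast
qed

lemma boundary_sub:
  assumes A: "closedin T A" and B: "closedin T B" and AB: "A \<union> B = topspace T"
  shows "A \<inter> (T closure_of (topspace T - A)) \<subseteq> A \<inter> B"
proof -
  have "topspace T - A \<subseteq> B" using AB by blast
  then have "T closure_of (topspace T - A) \<subseteq> B" using B by (rule closure_of_minimal)
  then show ?thesis by blast
qed

lemma peano_union:
  assumes cT: "compact_space T" and A: "closedin T A" and B: "closedin T B"
    and AB: "A \<union> B = topspace T" and F: "finite (A \<inter> B)"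
    and PA: "peano_space (subtopology T A)" and PB: "peano_space (subtopology T B)"
  shows "peano_space T"
proof -
  have AT: "A \<subseteq> topspace T" using A closedin_subset by blast
  have BT: "B \<subseteq> topspace T" using B closedin_subset by blast
  obtain dA MA where dA: "Metric_space A dA" "subtopology T A = Metric_space.mtopology A dA"
    "\<forall>c>0. finite {C \<in> connected_components_of (subtopology T A). c < set_diam dA C}"
    "MA > 0" "\<And>p q. p \<in> A \<Longrightarrow> q \<in> A \<Longrightarrow> dA p q \<le> MA"
    using peano_metric_data[OF PA AT] by blast
  obtain dB MB where dB: "Metric_space B dB" "subtopology T B = Metric_space.mtopology B dB"
    "\<forall>c>0. finite {C \<in> connected_components_of (subtopology T B). c < set_diam dB C}"
    "MB > 0" "\<And>p q. p \<in> B \<Longrightarrow> q \<in> B \<Longrightarrow> dB p q \<le> MB"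
    using peano_metric_data[OF PB BT] by blast
  obtain \<rho> LA LB where R: "Metric_space (topspace T) \<rho>" "T = Metric_space.mtopology (topspace T) \<rho>"
    "LA > 0" "LB > 0" "\<forall>p\<in>A. \<forall>q\<in>A. \<rho> p q \<le> LA * dA p q" "\<forall>p\<in>B. \<forall>q\<in>B. \<rho> p q \<le> LB * dB p q"
    using union_metric[OF cT A B AB F dA(1,2,4,5) dB(1,2,4,5)] by blast
  interpret mr: Metric_space "topspace T" \<rho> by (rule R(1))
  have hT: "Hausdorff_space T" using R(2) mr.Hausdorff_space_mtopology by simp
  have cntA: "countable {C \<in> connected_components_of (subtopology T A). \<not> (\<exists>a. C = {a})}"
    using PA unfolding peano_space_def by (elim conjE)
  have cntB: "countable {C \<in> connected_components_of (subtopology T B). \<not> (\<exists>a. C = {a})}"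
    using PB unfolding peano_space_def by (elim conjE)
  have FA: "finite (A \<inter> (T closure_of (topspace T - A)))"
    using finite_subset[OF boundary_sub[OF A B AB] F] .
  have BA': "B \<union> A = topspace T" using AB by blast
  have FB: "finite (B \<inter> (T closure_of (topspace T - B)))"
    using finite_subset[OF boundary_sub[OF B A BA'] ] F by (simp add: Int_commute)
  define I where "I = (\<lambda>z. connected_component_of_set T z) ` (A \<inter> B)"
  have finI: "finite I" unfolding I_def using F by simp
  have meet: "C \<in> I" if C: "C \<in> connected_components_of T" and ne: "C \<inter> (A \<inter> B) \<noteq> {}" for C
  proof -
    obtain z where "z \<in> C" "z \<in> A \<inter> B" using ne by blast
    then show ?thesis unfolding I_def using comp_eq_of_mem[OF C] by blast
  qed
  have split: "(C \<in> connected_components_of (subtopology T A) \<and> C \<subseteq> A) \<or>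
               (C \<in> connected_components_of (subtopology T B) \<and> C \<subseteq> B) \<or> C \<in> I"
    if C: "C \<in> connected_components_of T" for C
  proof (cases "C \<inter> (A \<inter> B) = {}")
    case True then show ?thesis using comp_in_one_side[OF C A B AB] by blast
  next
    case False then show ?thesis using meet[OF C] by blast
  qed
  show ?thesis unfolding peano_space_def
  proof (intro conjI)
    show "compact_space T" by (rule cT)
    show "\<exists>M d. Metric_space M d \<and> T = Metric_space.mtopology M d \<and>
        (\<forall>c>0. finite {C \<in> connected_components_of T. c < set_diam d C})"
    proof (intro exI conjI allI impI)
      show "Metric_space (topspace T) \<rho>" by (rule R(1))
      show "T = Metric_space.mtopology (topspace T) \<rho>" by (rule R(2))
      fix c :: real assume c: "c > 0"
      have "{C \<in> connected_components_of T. c < set_diam \<rho> C} \<subseteq>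
            {C \<in> connected_components_of (subtopology T A). c / LA < set_diam dA C} \<union>
            {C \<in> connected_components_of (subtopology T B). c / LB < set_diam dB C} \<union> I"
      proof
        fix C assume "C \<in> {C \<in> connected_components_of T. c < set_diam \<rho> C}"
        then have C: "C \<in> connected_components_of T" and cd: "c < set_diam \<rho> C" by auto
        have Cne: "C \<noteq> {}" using nonempty_connected_components_of[OF C] .
        consider "C \<in> connected_components_of (subtopology T A)" "C \<subseteq> A"
          | "C \<in> connected_components_of (subtopology T B)" "C \<subseteq> B" | "C \<in> I"
          using split[OF C] by blast
        then show "C \<in> {C \<in> connected_components_of (subtopology T A). c / LA < set_diam dA C} \<union>
            {C \<in> connected_components_of (subtopology T B). c / LB < set_diam dB C} \<union> I"
        proof cases
          case 1
          have "c / LA < set_diam dA C" using diam_transfer[OF Cne 1(2) R(3) R(5) dA(5) cd] .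
          then show ?thesis using 1 by blast
        next
          case 2
          have "c / LB < set_diam dB C" using diam_transfer[OF Cne 2(2) R(4) R(6) dB(5) cd] .
          then show ?thesis using 2 by blast
        qed blast
      qed
      moreover have "finite ({C \<in> connected_components_of (subtopology T A). c / LA < set_diam dA C} \<union>
            {C \<in> connected_components_of (subtopology T B). c / LB < set_diam dB C} \<union> I)"
        using dA(3) dB(3) c R(3) R(4) finI by simp
      ultimately show "finite {C \<in> connected_components_of T. c < set_diam \<rho> C}" by (rule finite_subset)
    qed
    have "{C \<in> connected_components_of T. \<not> (\<exists>a. C = {a})} \<subseteq>
          {C \<in> connected_components_of (subtopology T A). \<not> (\<exists>a. C = {a})} \<union>
          {C \<in> connected_components_of (subtopology T B). \<not> (\<exists>a. C = {a})} \<union> I"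
      using split by blast
    moreover have "countable ({C \<in> connected_components_of (subtopology T A). \<not> (\<exists>a. C = {a})} \<union>
          {C \<in> connected_components_of (subtopology T B). \<not> (\<exists>a. C = {a})} \<union> I)"
      using cntA cntB finI by (simp add: countable_finite)
    ultimately show "countable {C \<in> connected_components_of T. \<not> (\<exists>a. C = {a})}" by (rule countable_subset)
    show "\<forall>C\<in>connected_components_of T. \<not> (\<exists>a. C = {a}) \<longrightarrow> locally_connected_space (subtopology T C)"
    proof (intro ballI impI)
      fix C assume C: "C \<in> connected_components_of T" and nd: "\<not> (\<exists>a. C = {a})"
      show "locally_connected_space (subtopology T C)"
      proof (cases "C \<inter> (A \<inter> B) = {}")
        case True
        then consider "C \<subseteq> A" "C \<in> connected_components_of (subtopology T A)"
          | "C \<subseteq> B" "C \<in> connected_components_of (subtopology T B)"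
          using comp_in_one_side[OF C A B AB] by blast
        then show ?thesis
        proof cases
          case 1
          have "locally_connected_space (subtopology (subtopology T A) C)" by (rule peano_lc_all[OF PA 1(2)])
          then show ?thesis using 1(1) by (simp add: subtopology_subtopology inf.absorb2)
        next
          case 2
          have "locally_connected_space (subtopology (subtopology T B) C)" by (rule peano_lc_all[OF PB 2(2)])
          then show ?thesis using 2(1) by (simp add: subtopology_subtopology inf.absorb2)
        qed
      next
        case False
        define GA where "GA = {G \<in> connected_components_of (subtopology T A). G \<subseteq> C}"
        define GB where "GB = {G \<in> connected_components_of (subtopology T B). G \<subseteq> C}"
        have Cc: "connectedin T C" using C by (rule connectedin_connected_components_of)
        have CT: "C \<subseteq> topspace T" using C by (rule connected_components_of_subset)
        have cover: "C \<subseteq> \<Union>(GA \<union> GB)"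
        proof
          fix z assume z: "z \<in> C"
          then have "z \<in> A \<or> z \<in> B" using CT AB by blast
          then show "z \<in> \<Union>(GA \<union> GB)"
          proof
            assume zA: "z \<in> A"
            define G where "G = connected_component_of_set (subtopology T A) z"
            have ztop: "z \<in> topspace (subtopology T A)" using zA AT by auto
            have GC: "G \<in> connected_components_of (subtopology T A)" unfolding G_def
              using connected_component_in_connected_components_of[of "subtopology T A" z] ztop by simp
            have zG: "z \<in> G" unfolding G_def mem_Collect_eq using ztop by (rule connected_component_of_refl[THEN iffD2])
            have "connectedin (subtopology T A) G" using GC by (rule connectedin_connected_components_of)
            then have "connectedin T G" unfolding connectedin_subtopology by blast
            moreover have "\<not> disjnt C G" using z zG unfolding disjnt_def by blast
            ultimately have "G \<subseteq> C" using connected_components_of_maximal[OF C] by blast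
            then show ?thesis unfolding GA_def using GC zG by blast
          next
            assume zB: "z \<in> B"
            define G where "G = connected_component_of_set (subtopology T B) z"
            have ztop: "z \<in> topspace (subtopology T B)" using zB BT by auto
            have GC: "G \<in> connected_components_of (subtopology T B)" unfolding G_def
              using connected_component_in_connected_components_of[of "subtopology T B" z] ztop by simp
            have zG: "z \<in> G" unfolding G_def mem_Collect_eq using ztop by (rule connected_component_of_refl[THEN iffD2])
            have "connectedin (subtopology T B) G" using GC by (rule connectedin_connected_components_of)
            then have "connectedin T G" unfolding connectedin_subtopology by blast
            moreover have "\<not> disjnt C G" using z zG unfolding disjnt_def by blast
            ultimately have "G \<subseteq> C" using connected_components_of_maximal[OF C] by blast
            then show ?thesis unfolding GB_def using GC zG by blast
          qed
        qed
        have sub: "\<Union>(GA \<union> GB) \<subseteq> C" unfolding GA_def GB_def by auto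
        have Ceq: "C = \<Union>(GA \<union> GB)" using cover sub by (rule subset_antisym)
        have GAmeet: "G \<inter> (A \<inter> B) \<noteq> {}" if G: "G \<in> GA" for G
        proof
          assume dis: "G \<inter> (A \<inter> B) = {}"
          have GcA: "G \<in> connected_components_of (subtopology T A)" "G \<subseteq> C" using G unfolding GA_def by auto
          have "G \<inter> (A \<inter> (T closure_of (topspace T - A))) = {}" using dis boundary_sub[OF A B AB] by blast
          then have GT: "G \<in> connected_components_of T" using comp_boundary[OF cT hT A FA GcA(1)] by blast
          have "G \<noteq> {}" using nonempty_connected_components_of[OF GcA(1)] .
          then have "\<not> disjnt G C" using GcA(2) unfolding disjnt_def by blast
          then have "C \<subseteq> G" using connected_components_of_maximal[OF GT Cc] by blast
          then have "C = G" using GcA(2) by blast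
          then show False using dis False by blast
        qed
        have GBmeet: "G \<inter> (A \<inter> B) \<noteq> {}" if G: "G \<in> GB" for G
        proof
          assume dis: "G \<inter> (A \<inter> B) = {}"
          have GcB: "G \<in> connected_components_of (subtopology T B)" "G \<subseteq> C" using G unfolding GB_def by auto
          have "G \<inter> (B \<inter> (T closure_of (topspace T - B))) = {}" using dis boundary_sub[OF B A BA'] by blast
          then have GT: "G \<in> connected_components_of T" using comp_boundary[OF cT hT B FB GcB(1)] by blast
          have "G \<noteq> {}" using nonempty_connected_components_of[OF GcB(1)] .
          then have "\<not> disjnt G C" using GcB(2) unfolding disjnt_def by blast
          then have "C \<subseteq> G" using connected_components_of_maximal[OF GT Cc] by blast
          then have "C = G" using GcB(2) by blast
          then show False using dis False by blast
        qed
        have "GA \<subseteq> (\<lambda>z. connected_component_of_set (subtopology T A) z) ` (A \<inter> B)"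
        proof
          fix G assume G: "G \<in> GA"
          then obtain z where z: "z \<in> G" "z \<in> A \<inter> B" using GAmeet by blast
          have Gc: "G \<in> connected_components_of (subtopology T A)" using G unfolding GA_def by blast
          have "G = connected_component_of_set (subtopology T A) z" using comp_eq_of_mem[OF Gc z(1)] .
          then show "G \<in> (\<lambda>z. connected_component_of_set (subtopology T A) z) ` (A \<inter> B)"
            using z(2) by (rule image_eqI)
        qed
        then have finGA: "finite GA" by (rule finite_subset) (use F in simp)
        have "GB \<subseteq> (\<lambda>z. connected_component_of_set (subtopology T B) z) ` (A \<inter> B)"
        proof
          fix G assume G: "G \<in> GB"
          then obtain z where z: "z \<in> G" "z \<in> A \<inter> B" using GBmeet by blast
          have Gc: "G \<in> connected_components_of (subtopology T B)" using G unfolding GB_def by blast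
          have "G = connected_component_of_set (subtopology T B) z" using comp_eq_of_mem[OF Gc z(1)] .
          then show "G \<in> (\<lambda>z. connected_component_of_set (subtopology T B) z) ` (A \<inter> B)"
            using z(2) by (rule image_eqI)
        qed
        then have finGB: "finite GB" by (rule finite_subset) (use F in simp)
        have props: "closedin T G \<and> locally_connected_space (subtopology T G)" if G: "G \<in> GA \<union> GB" for G
        proof (cases "G \<in> GA")
          case True
          then have GcA: "G \<in> connected_components_of (subtopology T A)" unfolding GA_def by blast
          have "closedin (subtopology T A) G" using GcA by (rule closedin_connected_components_of)
          then have c1: "closedin T G" using A by (rule closedin_trans_full)
          have GA': "G \<subseteq> A" using connected_components_of_subset[OF GcA] by auto
          have "locally_connected_space (subtopology (subtopology T A) G)" by (rule peano_lc_all[OF PA GcA])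
          then show ?thesis using c1 GA' by (simp add: subtopology_subtopology inf.absorb2)
        next
          case False
          then have GcB: "G \<in> connected_components_of (subtopology T B)" using G unfolding GB_def by blast
          have "closedin (subtopology T B) G" using GcB by (rule closedin_connected_components_of)
          then have c1: "closedin T G" using B by (rule closedin_trans_full)
          have GB': "G \<subseteq> B" using connected_components_of_subset[OF GcB] by auto
          have "locally_connected_space (subtopology (subtopology T B) G)" by (rule peano_lc_all[OF PB GcB])
          then show ?thesis using c1 GB' by (simp add: subtopology_subtopology inf.absorb2)
        qed
        have "locally_connected_space (subtopology T (\<Union>(GA \<union> GB)))"
          by (rule lc_finite_closed_union) (use finGA finGB props in auto)
        then show ?thesis using Ceq by simp
      qed
    qed
  qed
qed




lemma sing_in:
  assumes D: "monotone_decomp K D" and x: "x \<in> K" and s: "\<forall>d\<in>D. x \<in> d \<longrightarrow> d = {x}"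
  shows "{x} \<in> D"
  using decomp_proj_in[OF D x] s by metis

lemma proj_image_saturated:
  assumes D: "monotone_decomp K D" and S: "S \<subseteq> K" and sat: "\<And>x. x \<in> S \<Longrightarrow> decomp_proj D x \<subseteq> S"
  shows "decomp_proj D ` S = {e \<in> D. e \<subseteq> S}"
proof
  show "decomp_proj D ` S \<subseteq> {e \<in> D. e \<subseteq> S}" using decomp_proj_in(1)[OF D] S sat by blast
  show "{e \<in> D. e \<subseteq> S} \<subseteq> decomp_proj D ` S"
  proof
    fix e assume e: "e \<in> {e \<in> D. e \<subseteq> S}"
    then obtain z where z: "z \<in> e" using decomp_elem(1)[OF D] by blast
    have "decomp_proj D z = e" using decomp_proj_eq[OF D _ z] e by blast
    then show "e \<in> decomp_proj D ` S" using z e by blast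
  qed
qed

lemma usc_side:
  fixes K1 K2 :: "'a::metric_space set"
  assumes D1: "monotone_decomp K1 D1" and D2: "monotone_decomp K2 D2" and K2: "compact K2"
    and s1: "\<forall>x \<in> K1 \<inter> K2. \<forall>d \<in> D1. x \<in> d \<longrightarrow> d = {x}"
    and s2: "\<forall>x \<in> K1 \<inter> K2. \<forall>d \<in> D2. x \<in> d \<longrightarrow> d = {x}"
    and d: "d \<in> D1" and U: "open U" "d \<subseteq> U"
  shows "\<exists>V. open V \<and> d \<subseteq> V \<and> (\<forall>e\<in>D1 \<union> D2. e \<inter> V \<noteq> {} \<longrightarrow> e \<subseteq> U)"
proof -
  have usc1: "\<forall>d\<in>D1. \<forall>U. open U \<and> d \<subseteq> U \<longrightarrow>
        (\<exists>V. open V \<and> d \<subseteq> V \<and> (\<forall>e\<in>D1. e \<inter> V \<noteq> {} \<longrightarrow> e \<subseteq> U))" using D1 unfolding monotone_decomp_def by simp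
  have usc2: "\<forall>d\<in>D2. \<forall>U. open U \<and> d \<subseteq> U \<longrightarrow>
        (\<exists>V. open V \<and> d \<subseteq> V \<and> (\<forall>e\<in>D2. e \<inter> V \<noteq> {} \<longrightarrow> e \<subseteq> U))" using D2 unfolding monotone_decomp_def by simp
  have UU: "open U \<and> d \<subseteq> U" using U by blast
  obtain V1 where V1: "open V1" "d \<subseteq> V1" "\<forall>e\<in>D1. e \<inter> V1 \<noteq> {} \<longrightarrow> e \<subseteq> U"
    using usc1[rule_format, OF d UU] by (elim exE conjE)
  have dK1: "d \<subseteq> K1" using decomp_elem(4)[OF D1 d] .
  show ?thesis
  proof (cases "d \<inter> K2 = {}")
    case True
    have "open (V1 - K2)" using V1(1) K2 by (simp add: compact_imp_closed open_Diff)
    moreover have "d \<subseteq> V1 - K2" using V1(2) True by blast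
    moreover have "\<forall>e\<in>D1 \<union> D2. e \<inter> (V1 - K2) \<noteq> {} \<longrightarrow> e \<subseteq> U"
    proof (intro ballI impI)
      fix e assume e: "e \<in> D1 \<union> D2" and ne: "e \<inter> (V1 - K2) \<noteq> {}"
      show "e \<subseteq> U"
      proof (cases "e \<in> D1")
        case True then show ?thesis using V1(3) ne by blast
      next
        case False
        then have "e \<subseteq> K2" using e decomp_elem(4)[OF D2] by blast
        then show ?thesis using ne by blast
      qed
    qed
    ultimately show ?thesis by blast
  next
    case False
    then obtain z where z: "z \<in> d" "z \<in> K2" by blast
    have zF: "z \<in> K1 \<inter> K2" using z dK1 by blast
    have dz: "d = {z}" using s1 zF d z(1) by blast
    have zD2: "{z} \<in> D2" using sing_in[OF D2 z(2)] s2 zF by blast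
    have UU2: "open U \<and> {z} \<subseteq> U" using U dz by blast
    obtain V2 where V2: "open V2" "{z} \<subseteq> V2" "\<forall>e\<in>D2. e \<inter> V2 \<noteq> {} \<longrightarrow> e \<subseteq> U"
      using usc2[rule_format, OF zD2 UU2] by (elim exE conjE)
    have "open (V1 \<inter> V2)" using V1(1) V2(1) by blast
    moreover have "d \<subseteq> V1 \<inter> V2" using V1(2) V2(2) dz by blast
    moreover have "\<forall>e\<in>D1 \<union> D2. e \<inter> (V1 \<inter> V2) \<noteq> {} \<longrightarrow> e \<subseteq> U"
      using V1(3) V2(3) by blast
    ultimately show ?thesis by blast
  qed
qed

lemma union_monotone:
  fixes K1 K2 :: "'a::metric_space set"
  assumes D1: "monotone_decomp K1 D1" and D2: "monotone_decomp K2 D2"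
    and K1: "compact K1" and K2: "compact K2"
    and s1: "\<forall>x \<in> K1 \<inter> K2. \<forall>d \<in> D1. x \<in> d \<longrightarrow> d = {x}"
    and s2: "\<forall>x \<in> K1 \<inter> K2. \<forall>d \<in> D2. x \<in> d \<longrightarrow> d = {x}"
  shows "monotone_decomp (K1 \<union> K2) (D1 \<union> D2)"
proof -
  have u1: "\<Union>D1 = K1" using D1 unfolding monotone_decomp_def by simp
  have u2: "\<Union>D2 = K2" using D2 unfolding monotone_decomp_def by simp
  have e1: "\<forall>d\<in>D1. d \<noteq> {} \<and> compact d \<and> connected d" using D1 unfolding monotone_decomp_def by simp
  have e2: "\<forall>d\<in>D2. d \<noteq> {} \<and> compact d \<and> connected d" using D2 unfolding monotone_decomp_def by simp
  have j1: "\<forall>d\<in>D1. \<forall>e\<in>D1. d \<noteq> e \<longrightarrow> d \<inter> e = {}" using D1 unfolding monotone_decomp_def by simp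
  have j2: "\<forall>d\<in>D2. \<forall>e\<in>D2. d \<noteq> e \<longrightarrow> d \<inter> e = {}" using D2 unfolding monotone_decomp_def by simp
  have cross: "d = e" if d: "d \<in> D1" and e: "e \<in> D2" and ne: "d \<inter> e \<noteq> {}" for d e
  proof -
    obtain z where z: "z \<in> d" "z \<in> e" using ne by blast
    have "z \<in> K1 \<inter> K2" using z d e u1 u2 by blast
    then have "d = {z}" "e = {z}" using s1 s2 d e z by blast+
    then show ?thesis by simp
  qed
  have s1': "\<forall>x \<in> K2 \<inter> K1. \<forall>d \<in> D1. x \<in> d \<longrightarrow> d = {x}" using s1 by blast
  have s2': "\<forall>x \<in> K2 \<inter> K1. \<forall>d \<in> D2. x \<in> d \<longrightarrow> d = {x}" using s2 by blast
  show ?thesis unfolding monotone_decomp_def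
  proof (intro conjI)
    show "\<Union>(D1 \<union> D2) = K1 \<union> K2" using u1 u2 by blast
    show "\<forall>d\<in>D1 \<union> D2. d \<noteq> {} \<and> compact d \<and> connected d" using e1 e2 by blast
    show "\<forall>d\<in>D1 \<union> D2. \<forall>e\<in>D1 \<union> D2. d \<noteq> e \<longrightarrow> d \<inter> e = {}"
    proof (intro ballI impI)
      fix d e assume d: "d \<in> D1 \<union> D2" and e: "e \<in> D1 \<union> D2" and de: "d \<noteq> e"
      show "d \<inter> e = {}"
      proof (rule ccontr)
        assume ne: "d \<inter> e \<noteq> {}"
        consider "d \<in> D1" "e \<in> D1" | "d \<in> D2" "e \<in> D2" | "d \<in> D1" "e \<in> D2" | "d \<in> D2" "e \<in> D1"
          using d e by blast
        then show False
        proof cases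
          case 1 then show False using j1 de ne by blast
        next
          case 2 then show False using j2 de ne by blast
        next
          case 3 then show False using cross de ne by blast
        next
          case 4
          have "e \<inter> d \<noteq> {}" using ne by blast
          then show False using cross[OF 4(2) 4(1)] de by simp
        qed
      qed
    qed
    show "\<forall>d\<in>D1 \<union> D2. \<forall>U. open U \<and> d \<subseteq> U \<longrightarrow>
        (\<exists>V. open V \<and> d \<subseteq> V \<and> (\<forall>e\<in>D1 \<union> D2. e \<inter> V \<noteq> {} \<longrightarrow> e \<subseteq> U))"
    proof (intro ballI allI impI)
      fix d U assume d: "d \<in> D1 \<union> D2" and U: "open U \<and> d \<subseteq> U"
      show "\<exists>V. open V \<and> d \<subseteq> V \<and> (\<forall>e\<in>D1 \<union> D2. e \<inter> V \<noteq> {} \<longrightarrow> e \<subseteq> U)"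
      proof (cases "d \<in> D1")
        case True
        then show ?thesis using usc_side[OF D1 D2 K2 s1 s2 True] U by blast
      next
        case False
        then have "d \<in> D2" using d by blast
        then have "\<exists>V. open V \<and> d \<subseteq> V \<and> (\<forall>e\<in>D2 \<union> D1. e \<inter> V \<noteq> {} \<longrightarrow> e \<subseteq> U)"
          using usc_side[OF D2 D1 K1 s2' s1'] U by blast
        then show ?thesis by (simp add: Un_commute)
      qed
    qed
  qed
qed


theorem lemma10p5:
  fixes K1 K2 :: "complex set" and D1 D2 D :: "complex set set"
  assumes "compact K1" and "compact K2" and "finite (K1 \<inter> K2)"
    and "is_DPS K1 D1" and "is_DPS K2 D2" and "is_DPS (K1 \<union> K2) D"
    and "\<forall>x \<in> K1 \<inter> K2. \<forall>d \<in> D1. x \<in> d \<longrightarrow> d = {x}"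
    and "\<forall>x \<in> K1 \<inter> K2. \<forall>d \<in> D2. x \<in> d \<longrightarrow> d = {x}"
  shows "D = D1 \<union> D2 \<and> (\<forall>x \<in> K1 \<inter> K2. {x} \<in> D)"
proof -
  note K1 = assms(1) and K2 = assms(2) and F = assms(3)
  note s1 = assms(7) and s2 = assms(8)
  define K where "K = K1 \<union> K2"
  have K: "compact K" unfolding K_def using K1 K2 by (rule compact_Un)
  have D1m: "monotone_decomp K1 D1" and P1: "peano_space (decomp_topology K1 D1)"
    and fin1: "\<forall>D'. monotone_decomp K1 D' \<and> peano_space (decomp_topology K1 D') \<longrightarrow> (\<forall>d\<in>D1. \<exists>d'\<in>D'. d \<subseteq> d')"
    using assms(4) unfolding is_DPS_def by blast+
  have D2m: "monotone_decomp K2 D2" and P2: "peano_space (decomp_topology K2 D2)"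
    and fin2: "\<forall>D'. monotone_decomp K2 D' \<and> peano_space (decomp_topology K2 D') \<longrightarrow> (\<forall>d\<in>D2. \<exists>d'\<in>D'. d \<subseteq> d')"
    using assms(5) unfolding is_DPS_def by blast+
  have Dm: "monotone_decomp K D" and P: "peano_space (decomp_topology K D)"
    and fin: "\<forall>D'. monotone_decomp K D' \<and> peano_space (decomp_topology K D') \<longrightarrow> (\<forall>d\<in>D. \<exists>d'\<in>D'. d \<subseteq> d')"
    using assms(6) unfolding is_DPS_def K_def by blast+
  define D12 where "D12 = D1 \<union> D2"
  have D12m: "monotone_decomp K D12" unfolding D12_def K_def by (rule union_monotone[OF D1m D2m K1 K2 s1 s2])
  have u1: "\<Union>D1 = K1" using D1m unfolding monotone_decomp_def by simp
  have u2: "\<Union>D2 = K2" using D2m unfolding monotone_decomp_def by simp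
  have K1c: "closed K1" using K1 by (rule compact_imp_closed)
  have K2c: "closed K2" using K2 by (rule compact_imp_closed)
  have K1K: "K1 \<subseteq> K" unfolding K_def by blast
  have K2K: "K2 \<subseteq> K" unfolding K_def by blast
  have sat1: "decomp_proj D12 x \<subseteq> K1" if x: "x \<in> K1" for x
  proof -
    have xK: "x \<in> K" using x K1K by blast
    have in1: "decomp_proj D12 x \<in> D12" "x \<in> decomp_proj D12 x" using decomp_proj_in[OF D12m xK] by auto
    show ?thesis
    proof (cases "decomp_proj D12 x \<in> D1")
      case True then show ?thesis using u1 by blast
    next
      case False
      then have "decomp_proj D12 x \<in> D2" using in1 unfolding D12_def by blast
      moreover have "x \<in> K2" using calculation in1(2) u2 by blast
      ultimately have "decomp_proj D12 x = {x}" using s2 x in1(2) by blast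
      then show ?thesis using x by simp
    qed
  qed
  have sat2: "decomp_proj D12 x \<subseteq> K2" if x: "x \<in> K2" for x
  proof -
    have xK: "x \<in> K" using x K2K by blast
    have in1: "decomp_proj D12 x \<in> D12" "x \<in> decomp_proj D12 x" using decomp_proj_in[OF D12m xK] by auto
    show ?thesis
    proof (cases "decomp_proj D12 x \<in> D2")
      case True then show ?thesis using u2 by blast
    next
      case False
      then have "decomp_proj D12 x \<in> D1" using in1 unfolding D12_def by blast
      moreover have "x \<in> K1" using calculation in1(2) u1 by blast
      ultimately have "decomp_proj D12 x = {x}" using s1 x in1(2) by blast
      then show ?thesis using x by simp
    qed
  qed
  have side1: "{e \<in> D12. e \<subseteq> K1} = D1"
  proof
    show "D1 \<subseteq> {e \<in> D12. e \<subseteq> K1}" unfolding D12_def using u1 by blast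
    show "{e \<in> D12. e \<subseteq> K1} \<subseteq> D1"
    proof
      fix e assume e: "e \<in> {e \<in> D12. e \<subseteq> K1}"
      show "e \<in> D1"
      proof (cases "e \<in> D1")
        case False
        then have eD2: "e \<in> D2" using e unfolding D12_def by blast
        obtain z where z: "z \<in> e" using decomp_elem(1)[OF D2m eD2] by blast
        have zF: "z \<in> K1 \<inter> K2" using z e eD2 u2 by blast
        then have "e = {z}" using s2 eD2 z by blast
        moreover have "{z} \<in> D1" using sing_in[OF D1m] zF s1 by blast
        ultimately show ?thesis by simp
      qed simp
    qed
  qed
  have side2: "{e \<in> D12. e \<subseteq> K2} = D2"
  proof
    show "D2 \<subseteq> {e \<in> D12. e \<subseteq> K2}" unfolding D12_def using u2 by blast
    show "{e \<in> D12. e \<subseteq> K2} \<subseteq> D2"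
    proof
      fix e assume e: "e \<in> {e \<in> D12. e \<subseteq> K2}"
      show "e \<in> D2"
      proof (cases "e \<in> D2")
        case False
        then have eD1: "e \<in> D1" using e unfolding D12_def by blast
        obtain z where z: "z \<in> e" using decomp_elem(1)[OF D1m eD1] by blast
        have zF: "z \<in> K1 \<inter> K2" using z e eD1 u1 by blast
        then have "e = {z}" using s1 eD1 z by blast
        moreover have "{z} \<in> D2" using sing_in[OF D2m] zF s2 by blast
        ultimately show ?thesis by simp
      qed simp
    qed
  qed
  let ?Q12 = "decomp_topology K D12"
  have D1cl: "closedin ?Q12 D1"
  proof -
    have "closedin (top_of_set K) K1" using K1c K1K by (simp add: closed_subset)
    then have "closedin ?Q12 (decomp_proj D12 ` K1)" by (rule closed_map_decomp_proj[OF D12m K])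
    moreover have "decomp_proj D12 ` K1 = D1" using proj_image_saturated[OF D12m K1K sat1] side1 by simp
    ultimately show ?thesis by simp
  qed
  have D2cl: "closedin ?Q12 D2"
  proof -
    have "closedin (top_of_set K) K2" using K2c K2K by (simp add: closed_subset)
    then have "closedin ?Q12 (decomp_proj D12 ` K2)" by (rule closed_map_decomp_proj[OF D12m K])
    moreover have "decomp_proj D12 ` K2 = D2" using proj_image_saturated[OF D12m K2K sat2] side2 by simp
    ultimately show ?thesis by simp
  qed
  have finD: "finite (D1 \<inter> D2)"
  proof -
    have "D1 \<inter> D2 \<subseteq> (\<lambda>x. {x}) ` (K1 \<inter> K2)"
    proof
      fix d assume d: "d \<in> D1 \<inter> D2"
      obtain z where z: "z \<in> d" using decomp_elem(1)[OF D1m] d by blast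
      have zF: "z \<in> K1 \<inter> K2" using z d u1 u2 by blast
      then have "d = {z}" using s1 d z by blast
      then show "d \<in> (\<lambda>x. {x}) ` (K1 \<inter> K2)" using zF by blast
    qed
    then show ?thesis by (rule finite_subset) (use F in simp)
  qed
  have sub1: "subtopology ?Q12 D1 = decomp_topology K1 D1"
    using decomp_topology_restrict[OF D12m K, of D1] u1 K1c unfolding D12_def by simp
  have sub2: "subtopology ?Q12 D2 = decomp_topology K2 D2"
    using decomp_topology_restrict[OF D12m K, of D2] u2 K2c unfolding D12_def by simp
  have P12: "peano_space ?Q12"
  proof (rule peano_union[OF compact_space_decomp[OF D12m K] D1cl D2cl])
    show "D1 \<union> D2 = topspace ?Q12" using topspace_decomp_topology[OF D12m] unfolding D12_def by simp
    show "finite (D1 \<inter> D2)" by (rule finD)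
    show "peano_space (subtopology ?Q12 D1)" using sub1 P1 by simp
    show "peano_space (subtopology ?Q12 D2)" using sub2 P2 by simp
  qed
  have ref: "\<forall>e\<in>D. \<exists>d\<in>D12. e \<subseteq> d" using fin D12m P12 by blast
  have eside: "e \<subseteq> K1 \<or> e \<subseteq> K2" if e: "e \<in> D" for e
  proof -
    obtain d where "d \<in> D12" "e \<subseteq> d" using ref e by blast
    then show ?thesis unfolding D12_def using u1 u2 by blast
  qed
  have Fsing: "e = {z}" if e: "e \<in> D" and z: "z \<in> e" "z \<in> K1 \<inter> K2" for e z
  proof -
    obtain d where d: "d \<in> D12" "e \<subseteq> d" using ref e by blast
    have "d = {z}" using d z s1 s2 unfolding D12_def by blast
    then show ?thesis using d z by blast
  qed
  have satD1: "decomp_proj D x \<subseteq> K1" if x: "x \<in> K1" for x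
  proof -
    have xK: "x \<in> K" using x K1K by blast
    have in1: "decomp_proj D x \<in> D" "x \<in> decomp_proj D x" using decomp_proj_in[OF Dm xK] by auto
    show ?thesis
    proof (cases "decomp_proj D x \<subseteq> K1")
      case False
      then have "decomp_proj D x \<subseteq> K2" using eside[OF in1(1)] by blast
      then have "x \<in> K1 \<inter> K2" using x in1(2) by blast
      then have "decomp_proj D x = {x}" using Fsing[OF in1] by blast
      then show ?thesis using x by simp
    qed simp
  qed
  have satD2: "decomp_proj D x \<subseteq> K2" if x: "x \<in> K2" for x
  proof -
    have xK: "x \<in> K" using x K2K by blast
    have in1: "decomp_proj D x \<in> D" "x \<in> decomp_proj D x" using decomp_proj_in[OF Dm xK] by auto
    show ?thesis
    proof (cases "decomp_proj D x \<subseteq> K2")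
      case False
      then have "decomp_proj D x \<subseteq> K1" using eside[OF in1(1)] by blast
      then have "x \<in> K1 \<inter> K2" using x in1(2) by blast
      then have "decomp_proj D x = {x}" using Fsing[OF in1] by blast
      then show ?thesis using x by simp
    qed simp
  qed
  define E1 where "E1 = {e \<in> D. e \<subseteq> K1}"
  define E2 where "E2 = {e \<in> D. e \<subseteq> K2}"
  let ?Q = "decomp_topology K D"
  have E1cl: "closedin ?Q E1"
  proof -
    have "closedin (top_of_set K) K1" using K1c K1K by (simp add: closed_subset)
    then have "closedin ?Q (decomp_proj D ` K1)" by (rule closed_map_decomp_proj[OF Dm K])
    moreover have "decomp_proj D ` K1 = E1" unfolding E1_def by (rule proj_image_saturated[OF Dm K1K satD1])
    ultimately show ?thesis by simp
  qed
  have E2cl: "closedin ?Q E2"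
  proof -
    have "closedin (top_of_set K) K2" using K2c K2K by (simp add: closed_subset)
    then have "closedin ?Q (decomp_proj D ` K2)" by (rule closed_map_decomp_proj[OF Dm K])
    moreover have "decomp_proj D ` K2 = E2" unfolding E2_def by (rule proj_image_saturated[OF Dm K2K satD2])
    ultimately show ?thesis by simp
  qed
  have uE1: "\<Union>E1 = K1"
  proof
    show "\<Union>E1 \<subseteq> K1" unfolding E1_def by blast
    show "K1 \<subseteq> \<Union>E1"
    proof
      fix x assume x: "x \<in> K1"
      have xK: "x \<in> K" using x K1K by blast
      have "decomp_proj D x \<in> E1" unfolding E1_def using decomp_proj_in(1)[OF Dm xK] satD1[OF x] by blast
      then show "x \<in> \<Union>E1" using decomp_proj_in(2)[OF Dm xK] by blast
    qed
  qed
  have uE2: "\<Union>E2 = K2"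
  proof
    show "\<Union>E2 \<subseteq> K2" unfolding E2_def by blast
    show "K2 \<subseteq> \<Union>E2"
    proof
      fix x assume x: "x \<in> K2"
      have xK: "x \<in> K" using x K2K by blast
      have "decomp_proj D x \<in> E2" unfolding E2_def using decomp_proj_in(1)[OF Dm xK] satD2[OF x] by blast
      then show "x \<in> \<Union>E2" using decomp_proj_in(2)[OF Dm xK] by blast
    qed
  qed
  have E1E2: "finite (E1 \<inter> E2)"
  proof -
    have "E1 \<inter> E2 \<subseteq> (\<lambda>x. {x}) ` (K1 \<inter> K2)"
    proof
      fix e assume e: "e \<in> E1 \<inter> E2"
      then have eD: "e \<in> D" unfolding E1_def by blast
      obtain z where z: "z \<in> e" using decomp_elem(1)[OF Dm eD] by blast
      have zF: "z \<in> K1 \<inter> K2" using z e unfolding E1_def E2_def by blast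
      then have "e = {z}" using Fsing[OF eD z] by blast
      then show "e \<in> (\<lambda>x. {x}) ` (K1 \<inter> K2)" using zF by blast
    qed
    then show ?thesis by (rule finite_subset) (use F in simp)
  qed
  have topQ: "topspace ?Q = D" by (rule topspace_decomp_topology[OF Dm])
  have DE: "D = E1 \<union> E2" unfolding E1_def E2_def using eside by blast
  have bd1: "finite (E1 \<inter> (?Q closure_of (topspace ?Q - E1)))"
  proof -
    have "topspace ?Q - E1 \<subseteq> E2" using topQ DE by blast
    then have "?Q closure_of (topspace ?Q - E1) \<subseteq> E2" using E2cl by (rule closure_of_minimal)
    then have "E1 \<inter> (?Q closure_of (topspace ?Q - E1)) \<subseteq> E1 \<inter> E2" by blast
    then show ?thesis using E1E2 by (rule finite_subset)
  qed
  have bd2: "finite (E2 \<inter> (?Q closure_of (topspace ?Q - E2)))"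
  proof -
    have "topspace ?Q - E2 \<subseteq> E1" using topQ DE by blast
    then have "?Q closure_of (topspace ?Q - E2) \<subseteq> E1" using E1cl by (rule closure_of_minimal)
    then have "E2 \<inter> (?Q closure_of (topspace ?Q - E2)) \<subseteq> E1 \<inter> E2" by blast
    then show ?thesis using E1E2 by (rule finite_subset)
  qed
  have E1sub: "E1 \<subseteq> D" unfolding E1_def by blast
  have E2sub: "E2 \<subseteq> D" unfolding E2_def by blast
  have E1m: "monotone_decomp K1 E1" using monotone_decomp_subset[OF Dm E1sub] uE1 by simp
  have E2m: "monotone_decomp K2 E2" using monotone_decomp_subset[OF Dm E2sub] uE2 by simp
  have tE1: "decomp_topology K1 E1 = subtopology ?Q E1"
    using decomp_topology_restrict[OF Dm K E1sub] uE1 K1c by simp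
  have tE2: "decomp_topology K2 E2 = subtopology ?Q E2"
    using decomp_topology_restrict[OF Dm K E2sub] uE2 K2c by simp
  have PE1: "peano_space (decomp_topology K1 E1)"
    unfolding tE1 by (rule peano_closed_subspace[OF P E1cl bd1])
  have PE2: "peano_space (decomp_topology K2 E2)"
    unfolding tE2 by (rule peano_closed_subspace[OF P E2cl bd2])
  have r1: "\<forall>d\<in>D1. \<exists>e\<in>E1. d \<subseteq> e" using fin1 E1m PE1 by blast
  have r2: "\<forall>d\<in>D2. \<exists>e\<in>E2. d \<subseteq> e" using fin2 E2m PE2 by blast
  have disj12: "\<forall>d\<in>D12. \<forall>e\<in>D12. d \<noteq> e \<longrightarrow> d \<inter> e = {}" using D12m unfolding monotone_decomp_def by simp
  have disjD: "\<forall>d\<in>D. \<forall>e\<in>D. d \<noteq> e \<longrightarrow> d \<inter> e = {}" using Dm unfolding monotone_decomp_def by simp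
  have D12D: "D12 \<subseteq> D"
  proof
    fix d assume d: "d \<in> D12"
    obtain e where e: "e \<in> D" "d \<subseteq> e"
    proof (cases "d \<in> D1")
      case True then show ?thesis using r1 that unfolding E1_def by blast
    next
      case False then have "d \<in> D2" using d unfolding D12_def by blast
      then show ?thesis using r2 that unfolding E2_def by blast
    qed
    obtain d' where d': "d' \<in> D12" "e \<subseteq> d'" using ref e(1) by blast
    have "d \<noteq> {}" using decomp_elem(1)[OF D12m d] .
    then have "d \<inter> d' \<noteq> {}" using e(2) d'(2) by blast
    then have "d = d'" using disj12 d d'(1) by blast
    then have "d = e" using e(2) d'(2) by blast
    then show "d \<in> D" using e(1) by simp
  qed
  have DD12: "D \<subseteq> D12"
  proof
    fix e assume e: "e \<in> D"
    obtain d where d: "d \<in> D12" "e \<subseteq> d" using ref e by blast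
    have "e \<noteq> {}" using decomp_elem(1)[OF Dm e] .
    then have "e \<inter> d \<noteq> {}" using d(2) by blast
    moreover have "d \<in> D" using D12D d(1) by blast
    ultimately have "e = d" using disjD e by blast
    then show "e \<in> D12" using d(1) by simp
  qed
  have eq: "D = D1 \<union> D2" using D12D DD12 unfolding D12_def by blast
  have "\<forall>x \<in> K1 \<inter> K2. {x} \<in> D"
  proof
    fix x assume x: "x \<in> K1 \<inter> K2"
    then have "{x} \<in> D1" using sing_in[OF D1m] s1 by blast
    then show "{x} \<in> D" using eq by blast
  qed
  then show ?thesis using eq by blast
qed


end
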